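(* Let $(V,g)$ be a Euclidean vector space of dimension $n\ge3$, $N=\frac{(n-1)(n+2)}{2}$, $\alpha\in[1,N)$, and let $\bar{\Theta}_{n,\alpha}=\alpha^{-1}$ if $1\le\alpha\le n$ and $\bar{\Theta}_{n,\alpha}=\alpha^{-1}+\frac{n(n-\alpha)}{(n-2)\alpha}$ if $n\le\alpha<N$. Let $R$ be an algebraic curvature tensor on $V$ and $\mathring{R}$ its induced curvature operator of the second kind. If $\mathring{R}\in\mathcal{C}(\alpha,\bar{\Theta}_{n,\alpha})$ (respectively, $\mathring{R}\in\mathring{\mathcal{C}}(\alpha,\bar{\Theta}_{n,\alpha})$), then $R$ has nonnegative (respectively, positive) Ricci curvature.
   Context: $S^2_0(V)$ is the space of traceless symmetric two-tensors on $V$, of dimension $N$. An algebraic curvature tensor is $R\in S^2(\wedge^2V)$ satisfying the first Bianchi identity. The curvature operator of the second kind is $\mathring{R}=\pi\circ\overline{R}:S^2_0(V)\to S^2_0(V)$, where $\overline{R}(h)_{ij}=\sum_{k,l}R_{iklj}h_{kl}$ and $\pi$ is the orthogonal projection onto traceless tensors. Let $\lambda_1\le\cdots\le\lambda_N$ be its eigenvalues and $\bar\lambda$ their average; for non-integer $\alpha$, $\lambda_1+\cdots+\lambda_\alpha:=\lambda_1+\cdots+\lambda_{[\alpha]}+(\alpha-[\alpha])\lambda_{[\alpha]+1}$. For $\alpha\in[1,N)$, $\theta>-1$, $\mathcal{C}(\alpha,\theta)$ is the cone of symmetric operators on $S^2_0(V)$ with $\alpha^{-1}(\lambda_1+\cdots+\lambda_\alpha)\ge-\theta\bar\lambda$,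 and $\mathring{\mathcal{C}}(\alpha,\theta)$ is its interior. *)

theory Defs
  imports Complex_Main
begin

text \<open>V is identified with R^n via an orthonormal basis indexed by the finite type 'n,
  so g is the standard inner product; tensors are given by their components.\<close>

type_synonym 'n tensor4 = "'n \<Rightarrow> 'n \<Rightarrow> 'n \<Rightarrow> 'n \<Rightarrow> real"
type_synonym 'n tensor2 = "'n \<Rightarrow> 'n \<Rightarrow> real"

text \<open>Algebraic curvature tensor: element of S^2(wedge^2 V) satisfying the first Bianchi identity.
  Sign convention: R i j i j is the sectional curvature of the plane spanned by e_i, e_j.\<close>
definition alg_curv_tensor :: "('n::finite) tensor4 \<Rightarrow> bool" where
  "alg_curv_tensor R \<longleftrightarrow>
     (\<forall>i j k l. R i j k l = - R j i k l) \<and>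
     (\<forall>i j k l. R i j k l = - R i j l k) \<and>
     (\<forall>i j k l. R i j k l = R k l i j) \<and>
     (\<forall>i j k l. R i j k l + R j k i l + R k i j l = 0)"

definition dimS20 :: "nat \<Rightarrow> nat" where
  "dimS20 n = ((n - 1) * (n + 2)) div 2"

definition trace2 :: "('n::finite) tensor2 \<Rightarrow> real" where
  "trace2 h = (\<Sum>i\<in>UNIV. h i i)"

definition traceless_sym :: "('n::finite) tensor2 \<Rightarrow> bool" where
  "traceless_sym h \<longleftrightarrow> (\<forall>i j. h i j = h j i) \<and> trace2 h = 0"

definition inner2 :: "('n::finite) tensor2 \<Rightarrow> 'n tensor2 \<Rightarrow> real" where
  "inner2 h k = (\<Sum>i\<in>UNIV. \<Sum>j\<in>UNIV. h i j * k i j)"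

definition Rbar :: "('n::finite) tensor4 \<Rightarrow> 'n tensor2 \<Rightarrow> 'n tensor2" where
  "Rbar R h = (\<lambda>i j. \<Sum>k\<in>UNIV. \<Sum>l\<in>UNIV. R i k l j * h k l)"

definition proj0 :: "('n::finite) tensor2 \<Rightarrow> 'n tensor2" where
  "proj0 h = (\<lambda>i j. h i j - (if i = j then trace2 h / real (card (UNIV :: 'n set)) else 0))"

definition curv_op2 :: "('n::finite) tensor4 \<Rightarrow> 'n tensor2 \<Rightarrow> 'n tensor2" where
  "curv_op2 R h = proj0 (Rbar R h)"

definition is_eigenvalue_list :: "('n::finite) tensor4 \<Rightarrow> real list \<Rightarrow> bool" where
  "is_eigenvalue_list R lam \<longleftrightarrow>
     length lam = dimS20 (card (UNIV :: 'n set)) \<and> sorted lam \<and>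
     (\<exists>e :: nat \<Rightarrow> 'n tensor2.
        (\<forall>a < dimS20 (card (UNIV :: 'n set)). traceless_sym (e a)) \<and>
        (\<forall>a < dimS20 (card (UNIV :: 'n set)). \<forall>b < dimS20 (card (UNIV :: 'n set)).
            inner2 (e a) (e b) = (if a = b then 1 else 0)) \<and>
        (\<forall>a < dimS20 (card (UNIV :: 'n set)). curv_op2 R (e a) = (\<lambda>i j. lam ! a * e a i j)))"

definition curv_op2_eigenvalues :: "('n::finite) tensor4 \<Rightarrow> real list" where
  "curv_op2_eigenvalues R = (SOME lam. is_eigenvalue_list R lam)"

text \<open>lambda_1 + ... + lambda_alpha for real alpha (list is 0-indexed).\<close>
definition partial_eig_sum :: "real list \<Rightarrow> real \<Rightarrow> real" where
  "partial_eig_sum lam \<alpha> =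
     (\<Sum>a < nat \<lfloor>\<alpha>\<rfloor>. lam ! a) + (\<alpha> - of_int \<lfloor>\<alpha>\<rfloor>) * lam ! nat \<lfloor>\<alpha>\<rfloor>"

definition eig_average :: "real list \<Rightarrow> real" where
  "eig_average lam = sum_list lam / real (length lam)"

definition in_cone :: "('n::finite) tensor4 \<Rightarrow> real \<Rightarrow> real \<Rightarrow> bool" where
  "in_cone R \<alpha> \<theta> \<longleftrightarrow>
     partial_eig_sum (curv_op2_eigenvalues R) \<alpha> / \<alpha>
       \<ge> - \<theta> * eig_average (curv_op2_eigenvalues R)"

definition in_cone_interior :: "('n::finite) tensor4 \<Rightarrow> real \<Rightarrow> real \<Rightarrow> bool" where
  "in_cone_interior R \<alpha> \<theta> \<longleftrightarrow>
     partial_eig_sum (curv_op2_eigenvalues R) \<alpha> / \<alpha>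
       > - \<theta> * eig_average (curv_op2_eigenvalues R)"

definition Theta_bar :: "nat \<Rightarrow> real \<Rightarrow> real" where
  "Theta_bar n \<alpha> = (if \<alpha> \<le> real n then 1 / \<alpha>
                     else 1 / \<alpha> + real n * (real n - \<alpha>) / ((real n - 2) * \<alpha>))"

definition ricci :: "('n::finite) tensor4 \<Rightarrow> 'n tensor2" where
  "ricci R = (\<lambda>j k. \<Sum>i\<in>UNIV. R i j i k)"

definition ricci_form :: "('n::finite) tensor4 \<Rightarrow> ('n \<Rightarrow> real) \<Rightarrow> real" where
  "ricci_form R v = (\<Sum>j\<in>UNIV. \<Sum>k\<in>UNIV. ricci R j k * v j * v k)"

definition nonneg_ricci :: "('n::finite) tensor4 \<Rightarrow> bool" where
  "nonneg_ricci R \<longleftrightarrow> (\<forall>v. ricci_form R v \<ge> 0)"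

definition pos_ricci :: "('n::finite) tensor4 \<Rightarrow> bool" where
  "pos_ricci R \<longleftrightarrow> (\<forall>v. (\<exists>i. v i \<noteq> 0) \<longrightarrow> ricci_form R v > 0)"

end

theory Submission
  imports Defs "HOL-Analysis.Analysis"
begin


lemma inner2_sym: "inner2 h k = inner2 k h"
  unfolding inner2_def by (simp add: mult.commute)

lemma inner2_add_left: "inner2 (\<lambda>i j. h i j + g i j) k = inner2 h k + inner2 g k"
  unfolding inner2_def by (simp add: distrib_right sum.distrib)

lemma inner2_diff_left: "inner2 (\<lambda>i j. h i j - g i j) k = inner2 h k - inner2 g k"
  unfolding inner2_def by (simp add: left_diff_distrib sum_subtractf)

lemma inner2_scale_left: "inner2 (\<lambda>i j. c * h i j) k = c * inner2 h k"
  unfolding inner2_def by (simp add: sum_distrib_left mult.assoc)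

lemma inner2_sum_left: "inner2 (\<lambda>i j. \<Sum>a\<in>A. f a i j) k = (\<Sum>a\<in>A. inner2 (f a) k)"
  unfolding inner2_def sum_distrib_right
  apply (subst sum.swap) by (rule sum.swap)

lemma inner2_add_right: "inner2 k (\<lambda>i j. h i j + g i j) = inner2 k h + inner2 k g"
  unfolding inner2_def by (simp add: distrib_left sum.distrib)
lemma inner2_diff_right: "inner2 k (\<lambda>i j. h i j - g i j) = inner2 k h - inner2 k g"
  unfolding inner2_def by (simp add: right_diff_distrib sum_subtractf)
lemma inner2_scale_right: "inner2 k (\<lambda>i j. c * h i j) = c * inner2 k h"
  unfolding inner2_def by (simp add: sum_distrib_left mult.left_commute)
lemma inner2_sum_right: "inner2 k (\<lambda>i j. \<Sum>a\<in>A. f a i j) = (\<Sum>a\<in>A. inner2 k (f a))"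
  by (subst (1 2) inner2_sym) (simp add: inner2_sum_left inner2_sym)

lemma inner2_self_nonneg: "0 \<le> inner2 h h"
  unfolding inner2_def by (intro sum_nonneg) auto

lemma inner2_self_eq0: "inner2 h h = 0 \<Longrightarrow> h = (\<lambda>i j. 0)"
proof -
  assume a: "inner2 h h = 0"
  have "\<forall>i. (\<Sum>j\<in>UNIV. h i j * h i j) = 0"
    using a unfolding inner2_def
    by (subst (asm) sum_nonneg_eq_0_iff) (auto intro: sum_nonneg)
  then have "\<forall>i j. h i j * h i j = 0"
    by (subst (asm) sum_nonneg_eq_0_iff) auto
  then show "h = (\<lambda>i j. 0)" by (auto intro!: ext)
qed

definition orthonormal_fam :: "(nat \<Rightarrow> ('n::finite) tensor2) \<Rightarrow> nat \<Rightarrow> bool" where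
  "orthonormal_fam f m \<longleftrightarrow> (\<forall>a<m. \<forall>b<m. inner2 (f a) (f b) = (if a = b then 1 else 0))"

definition lc :: "(nat \<Rightarrow> real) \<Rightarrow> (nat \<Rightarrow> ('n::finite) tensor2) \<Rightarrow> nat \<Rightarrow> 'n tensor2" where
  "lc c f m = (\<lambda>i j. \<Sum>a<m. c a * f a i j)"

lemma inner2_lc_left: "inner2 (lc c f m) k = (\<Sum>a<m. c a * inner2 (f a) k)"
  unfolding lc_def by (simp add: inner2_sum_left inner2_scale_left)

lemma inner2_lc_fam:
  assumes "orthonormal_fam f m" "b < m"
  shows "inner2 (lc c f m) (f b) = c b"
proof -
  have "inner2 (lc c f m) (f b) = (\<Sum>a<m. c a * (if a = b then 1 else 0))"
    unfolding inner2_lc_left using assms unfolding orthonormal_fam_def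
    by (intro sum.cong) auto
  also have "\<dots> = (\<Sum>a<m. if a = b then c a else 0)" by (intro sum.cong) auto
  also have "\<dots> = c b" using assms(2) by (simp add: sum.delta)
  finally show ?thesis .
qed

lemma bessel:
  assumes "orthonormal_fam f m"
  shows "(\<Sum>a<m. (inner2 y (f a))\<^sup>2) \<le> inner2 y y"
proof -
  define c where "c a = inner2 y (f a)" for a
  define r where "r = (\<lambda>i j. y i j - lc c f m i j)"
  have 1: "inner2 (lc c f m) y = (\<Sum>a<m. (c a)\<^sup>2)"
    unfolding inner2_lc_left c_def by (simp add: inner2_sym power2_eq_square)
  have 2: "inner2 (lc c f m) (lc c f m) = (\<Sum>a<m. (c a)\<^sup>2)"
    unfolding inner2_lc_left
    by (subst inner2_sym) (simp add: inner2_lc_fam[OF assms] power2_eq_square)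
  have 3: "inner2 y (lc c f m) = (\<Sum>a<m. (c a)\<^sup>2)" using 1 inner2_sym by metis
  have "inner2 r r = inner2 y y - inner2 (lc c f m) y - (inner2 y (lc c f m) - inner2 (lc c f m) (lc c f m))"
    unfolding r_def inner2_diff_left inner2_diff_right by simp
  then have "inner2 r r = inner2 y y - (\<Sum>a<m. (c a)\<^sup>2)"
    using 1 2 3 by simp
  with inner2_self_nonneg[of r] show ?thesis unfolding c_def by linarith
qed


definition symP :: "('n::finite) tensor2 \<Rightarrow> 'n tensor2" where
  "symP X = (\<lambda>i j. (X i j + X j i) / 2 - (if i = j then trace2 X / real (card (UNIV :: 'n set)) else 0))"

definition Ebas :: "'n \<Rightarrow> 'n \<Rightarrow> ('n::finite) tensor2" where
  "Ebas p q = (\<lambda>i j. if i = p then (if j = q then 1 else 0) else 0)"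

lemma if_mult0: "(if c then a else 0) * (x::real) = (if c then a * x else 0)" by simp
lemma mult_if0: "(x::real) * (if c then a else 0) = (if c then x * a else 0)" by simp

lemma card_pos: "0 < real (card (UNIV :: ('n::finite) set))"
  by (simp add: finite_UNIV_card_ge_0)

lemma real_dimS20: "1 \<le> n \<Longrightarrow> real (dimS20 n) = (real n - 1) * (real n + 2) / 2"
proof -
  assume n: "1 \<le> n"
  have ev: "even ((n - 1) * (n + 2))"
  proof (cases "even n")
    case True then show ?thesis by simp
  next
    case False then have "even (n - 1)" using n by simp
    then show ?thesis by simp
  qed
  have "real (dimS20 n) = real ((n - 1) * (n + 2)) / 2"
    unfolding dimS20_def using ev by (simp add: real_of_nat_div)
  moreover have "real ((n - 1) * (n + 2)) = (real n - 1) * (real n + 2)"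
  proof -
    obtain k where k: "n = Suc k" using n by (cases n) auto
    show ?thesis unfolding k by (simp add: algebra_simps)
  qed
  ultimately show ?thesis by simp
qed

lemma trace2_symP: fixes X :: "('n::finite) tensor2" shows "trace2 (symP X) = 0"
proof -
  have "trace2 (symP X) = (\<Sum>i\<in>UNIV. X i i - trace2 X / real (card (UNIV :: 'n set)))"
    unfolding symP_def trace2_def by (intro sum.cong) auto
  also have "\<dots> = trace2 X - real (card (UNIV :: 'n set)) * (trace2 X / real (card (UNIV :: 'n set)))"
    by (simp add: sum_subtractf trace2_def)
  also have "\<dots> = 0" using card_pos[where 'n='n] by simp
  finally show ?thesis .
qed

lemma symP_S: fixes X :: "('n::finite) tensor2" shows "traceless_sym (symP X)"
  unfolding traceless_sym_def using trace2_symP[of X]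
  by (auto simp: symP_def add.commute)

lemma inner2_transpose_sym:
  assumes "\<forall>i j. e i j = e j i"
  shows "inner2 (\<lambda>i j. X j i) e = inner2 X e"
proof -
  have "inner2 (\<lambda>i j. X j i) e = (\<Sum>i\<in>UNIV. \<Sum>j\<in>UNIV. X j i * e j i)"
    unfolding inner2_def using assms by simp
  also have "\<dots> = inner2 X e" unfolding inner2_def by (rule sum.swap)
  finally show ?thesis .
qed

lemma inner2_diagterm:
  "inner2 (\<lambda>i j. if i = j then c else 0) e = c * trace2 e"
  unfolding inner2_def trace2_def
  by (simp add: if_mult0 sum.delta sum_distrib_left)

lemma symP_inner:
  fixes X :: "('n::finite) tensor2"
  assumes "traceless_sym e"
  shows "inner2 (symP X) e = inner2 X e"
proof -
  have s: "\<forall>i j. e i j = e j i" and t: "trace2 e = 0"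
    using assms unfolding traceless_sym_def by auto
  have "symP X = (\<lambda>i j. (1/2) * (\<lambda>i j. X i j + X j i) i j - (\<lambda>i j. if i = j then trace2 X / real (card (UNIV :: 'n set)) else 0) i j)"
    unfolding symP_def by auto
  then have "inner2 (symP X) e = (1/2) * (inner2 X e + inner2 (\<lambda>i j. X j i) e)
        - (trace2 X / real (card (UNIV :: 'n set))) * trace2 e"
    by (simp only: inner2_diff_left inner2_scale_left inner2_add_left inner2_diagterm)
  also have "\<dots> = inner2 X e" using inner2_transpose_sym[OF s] t by simp
  finally show ?thesis .
qed

lemma inner2_Ebas_left: "inner2 (Ebas p q) e = e p q"
proof -
  have "\<And>i j. Ebas p q i j * e i j = (if j = q then (if i = p then e i j else 0) else 0)"
    by (simp add: Ebas_def)
  then show ?thesis unfolding inner2_def by (simp add: sum.delta)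
qed

lemma inner2_Ebas_right: "inner2 e (Ebas p q) = e p q"
  using inner2_Ebas_left inner2_sym by metis

lemma trace2_Ebas: "trace2 (Ebas p q) = (if p = q then 1 else 0)"
  unfolding trace2_def Ebas_def by (simp add: sum.delta')

lemma symP_Ebas_diag:
  fixes p q :: "'n::finite"
  shows "symP (Ebas p q) p q = (1 + (if p = q then 1 else 0)) / 2 - (if p = q then 1 / real (card (UNIV :: ('n::finite) set)) else 0)"
  unfolding symP_def trace2_Ebas by (auto simp: Ebas_def)

lemma sum_symP_Ebas:
  "(\<Sum>p\<in>(UNIV::('n::finite) set). \<Sum>q\<in>UNIV. symP (Ebas p q) p q) = real (dimS20 (card (UNIV :: ('n::finite) set)))"
proof -
  let ?n = "real (card (UNIV :: 'n set))"
  have "(\<Sum>p\<in>(UNIV::'n set). \<Sum>q\<in>UNIV. symP (Ebas p q) p q)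
      = (\<Sum>p\<in>(UNIV::'n set). (\<Sum>q\<in>(UNIV::'n set). 1/2) + (1/2 - 1/?n))"
  proof (rule sum.cong[OF refl])
    fix p :: 'n
    have "(\<Sum>q\<in>UNIV. symP (Ebas p q) p q) = (\<Sum>q\<in>UNIV. 1/2 + (if q = p then 1/2 - 1/?n else 0))"
      unfolding symP_Ebas_diag by (intro sum.cong) auto
    also have "\<dots> = (\<Sum>q\<in>(UNIV::'n set). 1/2) + (1/2 - 1/?n)"
      by (simp add: sum.distrib sum.delta)
    finally show "(\<Sum>q\<in>UNIV. symP (Ebas p q) p q) = (\<Sum>q\<in>(UNIV::'n set). 1/2) + (1/2 - 1/?n)" .
  qed
  also have "\<dots> = ?n * (?n / 2 + (1/2 - 1/?n))" by simp
  also have "\<dots> = (?n - 1) * (?n + 2) / 2" using card_pos[where 'n='n] by (simp add: field_simps)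
  also have "\<dots> = real (dimS20 (card (UNIV :: 'n set)))"
    by (subst real_dimS20) (auto simp: Suc_le_eq finite_UNIV_card_ge_0)
  finally show ?thesis .
qed

lemma traceless_sym_lc:
  assumes "\<forall>a<m. traceless_sym (f a)"
  shows "traceless_sym (lc c f m)"
proof -
  have "trace2 (lc c f m) = (\<Sum>a<m. c a * trace2 (f a))"
    unfolding lc_def trace2_def sum_distrib_left by (rule sum.swap)
  also have "\<dots> = 0" using assms by (simp add: traceless_sym_def)
  finally show ?thesis using assms unfolding traceless_sym_def lc_def by auto
qed

lemma traceless_sym_diff:
  "traceless_sym h \<Longrightarrow> traceless_sym g \<Longrightarrow> traceless_sym (\<lambda>i j. h i j - g i j)"
  unfolding traceless_sym_def trace2_def by (simp add: sum_subtractf)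

lemma traceless_sym_add:
  "traceless_sym h \<Longrightarrow> traceless_sym g \<Longrightarrow> traceless_sym (\<lambda>i j. h i j + g i j)"
  unfolding traceless_sym_def trace2_def by (simp add: sum.distrib)

lemma traceless_sym_scale:
  "traceless_sym h \<Longrightarrow> traceless_sym (\<lambda>i j. c * h i j)"
  unfolding traceless_sym_def trace2_def by (simp add: sum_distrib_left[symmetric])

lemma normalize:
  assumes "inner2 r r \<noteq> 0"
  shows "inner2 (\<lambda>i j. (1 / sqrt (inner2 r r)) * r i j) (\<lambda>i j. (1 / sqrt (inner2 r r)) * r i j) = 1"
proof -
  have p: "0 < inner2 r r" using assms inner2_self_nonneg[of r] by linarith
  show ?thesis unfolding inner2_scale_left inner2_scale_right
    using p by (simp add: field_simps)
qed

lemma sum_swap3: "(\<Sum>a\<in>A. \<Sum>p\<in>B. \<Sum>q\<in>C. F a p q) = (\<Sum>p\<in>B. \<Sum>q\<in>C. \<Sum>a\<in>A. F a p q)"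
proof -
  have "(\<Sum>a\<in>A. \<Sum>p\<in>B. \<Sum>q\<in>C. F a p q) = (\<Sum>p\<in>B. \<Sum>a\<in>A. \<Sum>q\<in>C. F a p q)" by (rule sum.swap)
  also have "\<dots> = (\<Sum>p\<in>B. \<Sum>q\<in>C. \<Sum>a\<in>A. F a p q)" by (rule sum.cong[OF refl]) (rule sum.swap)
  finally show ?thesis .
qed

lemma count_bound:
  fixes f :: "nat \<Rightarrow> ('n::finite) tensor2"
  assumes "orthonormal_fam f m" "\<forall>a<m. traceless_sym (f a)"
  shows "m \<le> dimS20 (card (UNIV :: ('n::finite) set))"
proof -
  have "real m = (\<Sum>a<m. inner2 (f a) (f a))"
    using assms(1) unfolding orthonormal_fam_def by simp
  also have "\<dots> = (\<Sum>a<m. \<Sum>p\<in>(UNIV::'n set). \<Sum>q\<in>UNIV. (inner2 (symP (Ebas p q)) (f a))\<^sup>2)"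
  proof (rule sum.cong[OF refl])
    fix a assume "a \<in> {..<m}"
    then have "\<And>p q. inner2 (symP (Ebas p q)) (f a) = f a p q"
      using assms(2) by (simp add: symP_inner inner2_Ebas_left)
    then show "inner2 (f a) (f a) = (\<Sum>p\<in>(UNIV::'n set). \<Sum>q\<in>UNIV. (inner2 (symP (Ebas p q)) (f a))\<^sup>2)"
      by (simp add: inner2_def power2_eq_square)
  qed
  also have "\<dots> = (\<Sum>p\<in>(UNIV::'n set). \<Sum>q\<in>UNIV. \<Sum>a<m. (inner2 (symP (Ebas p q)) (f a))\<^sup>2)"
    by (rule sum_swap3)
  also have "\<dots> \<le> (\<Sum>p\<in>(UNIV::'n set). \<Sum>q\<in>UNIV. inner2 (symP (Ebas p q)) (symP (Ebas p q)))"
    by (intro sum_mono bessel assms(1))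
  also have "\<dots> = (\<Sum>p\<in>(UNIV::'n set). \<Sum>q\<in>UNIV. symP (Ebas p q) p q)"
    by (simp add: symP_inner[OF symP_S] inner2_Ebas_left)
  also have "\<dots> = real (dimS20 (card (UNIV :: 'n set)))" by (rule sum_symP_Ebas)
  finally show ?thesis by simp
qed


lemma exists_orth:
  fixes f :: "nat \<Rightarrow> ('n::finite) tensor2"
  assumes "orthonormal_fam f k" "\<forall>a<k. traceless_sym (f a)" "k < dimS20 (card (UNIV::'n set))"
  shows "\<exists>h. traceless_sym h \<and> inner2 h h = 1 \<and> (\<forall>a<k. inner2 h (f a) = 0)"
proof (rule ccontr)
  assume nex: "\<not> ?thesis"
  have key: "symP (Ebas p q) p q = (\<Sum>a<k. f a p q * f a p q)" for p q
  proof -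
    define r where "r = (\<lambda>i j. symP (Ebas p q) i j - lc (\<lambda>a. f a p q) f k i j)"
    have Sr: "traceless_sym r" unfolding r_def
      by (intro traceless_sym_diff symP_S traceless_sym_lc assms(2))
    have orth: "\<forall>b<k. inner2 r (f b) = 0"
    proof (intro allI impI)
      fix b assume b: "b < k"
      have "inner2 (symP (Ebas p q)) (f b) = f b p q"
        using assms(2) b by (simp add: symP_inner inner2_Ebas_left)
      moreover have "inner2 (lc (\<lambda>a. f a p q) f k) (f b) = f b p q"
        by (rule inner2_lc_fam[OF assms(1) b])
      ultimately show "inner2 r (f b) = 0" unfolding r_def inner2_diff_left by simp
    qed
    have "inner2 r r = 0"
    proof (rule ccontr)
      assume nz: "inner2 r r \<noteq> 0"
      let ?h = "\<lambda>i j. (1 / sqrt (inner2 r r)) * r i j"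
      have "traceless_sym ?h" by (rule traceless_sym_scale[OF Sr])
      moreover have "inner2 ?h ?h = 1" by (rule normalize[OF nz])
      moreover have "\<forall>a<k. inner2 ?h (f a) = 0" unfolding inner2_scale_left using orth by simp
      ultimately show False using nex by blast
    qed
    then have "r = (\<lambda>i j. 0)" by (rule inner2_self_eq0)
    then have "r p q = 0" by simp
    then show ?thesis unfolding r_def lc_def by simp
  qed
  have "real (dimS20 (card (UNIV::'n set))) = (\<Sum>p\<in>(UNIV::'n set). \<Sum>q\<in>UNIV. symP (Ebas p q) p q)"
    by (rule sum_symP_Ebas[symmetric])
  also have "\<dots> = (\<Sum>p\<in>(UNIV::'n set). \<Sum>q\<in>UNIV. \<Sum>a<k. f a p q * f a p q)" by (simp add: key)
  also have "\<dots> = (\<Sum>a<k. inner2 (f a) (f a))" unfolding inner2_def by (rule sum_swap3[symmetric])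
  also have "\<dots> = real k" using assms(1) unfolding orthonormal_fam_def by simp
  finally show False using assms(3) by simp
qed

lemma complete:
  fixes f :: "nat \<Rightarrow> ('n::finite) tensor2"
  assumes "orthonormal_fam f (dimS20 (card (UNIV::'n set)))"
    "\<forall>a<dimS20 (card (UNIV::'n set)). traceless_sym (f a)" "traceless_sym h"
  shows "h = lc (\<lambda>a. inner2 h (f a)) f (dimS20 (card (UNIV::'n set)))"
proof -
  let ?N = "dimS20 (card (UNIV::'n set))"
  define c where "c a = inner2 h (f a)" for a
  define r where "r = (\<lambda>i j. h i j - lc c f ?N i j)"
  have Sr: "traceless_sym r" unfolding r_def
    by (intro traceless_sym_diff traceless_sym_lc assms(2,3))
  have orth: "\<forall>b<?N. inner2 r (f b) = 0"
  proof (intro allI impI)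
    fix b assume b: "b < ?N"
    show "inner2 r (f b) = 0" unfolding r_def inner2_diff_left inner2_lc_fam[OF assms(1) b]
      by (simp add: c_def)
  qed
  have "inner2 r r = 0"
  proof (rule ccontr)
    assume nz: "inner2 r r \<noteq> 0"
    define g where "g = (\<lambda>i j. (1 / sqrt (inner2 r r)) * r i j)"
    have Sg: "traceless_sym g" unfolding g_def by (rule traceless_sym_scale[OF Sr])
    have gg: "inner2 g g = 1" unfolding g_def by (rule normalize[OF nz])
    have go: "\<forall>a<?N. inner2 g (f a) = 0" unfolding g_def inner2_scale_left using orth by simp
    define f' where "f' = f(?N := g)"
    have "orthonormal_fam f' (Suc ?N)" unfolding orthonormal_fam_def
    proof (intro allI impI)
      fix a b assume a: "a < Suc ?N" and b: "b < Suc ?N"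
      show "inner2 (f' a) (f' b) = (if a = b then 1 else 0)"
      proof (cases "a = ?N")
        case True
        then show ?thesis
        proof (cases "b = ?N")
          case True with \<open>a = ?N\<close> show ?thesis by (simp add: f'_def gg)
        next
          case False then have "b < ?N" using b by simp
          then show ?thesis using \<open>a = ?N\<close> go False by (simp add: f'_def)
        qed
      next
        case False then have a': "a < ?N" using a by simp
        show ?thesis
        proof (cases "b = ?N")
          case True then show ?thesis using a' go False by (simp add: f'_def inner2_sym[of "f a"])
        next
          case False then have "b < ?N" using b by simp
          then show ?thesis using a' assms(1) \<open>a \<noteq> ?N\<close> False
            unfolding orthonormal_fam_def by (simp add: f'_def)
        qed
      qed
    qed
    moreover have "\<forall>a<Suc ?N. traceless_sym (f' a)"
      using assms(2) Sg by (auto simp: f'_def less_Suc_eq)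
    ultimately have "Suc ?N \<le> ?N" by (rule count_bound)
    then show False by simp
  qed
  then have "r = (\<lambda>i j. 0)" by (rule inner2_self_eq0)
  then have "\<forall>i j. h i j = lc c f ?N i j" unfolding r_def by (metis eq_iff_diff_eq_0)
  then show ?thesis unfolding c_def by auto
qed

lemma parseval:
  fixes f :: "nat \<Rightarrow> ('n::finite) tensor2"
  assumes "orthonormal_fam f (dimS20 (card (UNIV::'n set)))"
    "\<forall>a<dimS20 (card (UNIV::'n set)). traceless_sym (f a)" "traceless_sym h"
  shows "inner2 h g = (\<Sum>a<dimS20 (card (UNIV::'n set)). inner2 h (f a) * inner2 (f a) g)"
proof -
  let ?N = "dimS20 (card (UNIV::'n set))"
  define c where "c a = inner2 h (f a)" for a
  have e: "h = lc c f ?N" using complete[OF assms] unfolding c_def .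
  have "inner2 h g = inner2 (lc c f ?N) g" by (subst e) (rule refl)
  also have "\<dots> = (\<Sum>a<?N. c a * inner2 (f a) g)" by (rule inner2_lc_left)
  finally show ?thesis unfolding c_def .
qed

lemma resolution:
  fixes f :: "nat \<Rightarrow> ('n::finite) tensor2"
  assumes "orthonormal_fam f (dimS20 (card (UNIV::'n set)))"
    "\<forall>a<dimS20 (card (UNIV::'n set)). traceless_sym (f a)"
  shows "(\<Sum>a<dimS20 (card (UNIV::'n set)). f a p q * f a i j) = symP (Ebas p q) i j"
proof -
  let ?N = "dimS20 (card (UNIV::'n set))"
  have "symP (Ebas p q) i j = inner2 (symP (Ebas p q)) (Ebas i j)" by (simp add: inner2_Ebas_right)
  also have "\<dots> = (\<Sum>a<?N. inner2 (symP (Ebas p q)) (f a) * inner2 (f a) (Ebas i j))"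
    by (rule parseval[OF assms symP_S])
  also have "\<dots> = (\<Sum>a<?N. f a p q * f a i j)"
    using assms(2) by (intro sum.cong refl) (simp add: symP_inner inner2_Ebas_left inner2_Ebas_right)
  finally show ?thesis by simp
qed


lemma sum_swap4:
  "(\<Sum>i\<in>A. \<Sum>j\<in>B. \<Sum>k\<in>C. \<Sum>l\<in>D. F i j k l) = (\<Sum>k\<in>C. \<Sum>l\<in>D. \<Sum>i\<in>A. \<Sum>j\<in>B. F i j k l)"
proof -
  have "(\<Sum>i\<in>A. \<Sum>j\<in>B. \<Sum>k\<in>C. \<Sum>l\<in>D. F i j k l) = (\<Sum>j\<in>B. \<Sum>k\<in>C. \<Sum>i\<in>A. \<Sum>l\<in>D. F i j k l)"
    by (rule sum_swap3)
  also have "\<dots> = (\<Sum>k\<in>C. \<Sum>i\<in>A. \<Sum>j\<in>B. \<Sum>l\<in>D. F i j k l)"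
    by (rule sum_swap3)
  also have "\<dots> = (\<Sum>k\<in>C. \<Sum>l\<in>D. \<Sum>i\<in>A. \<Sum>j\<in>B. F i j k l)"
    by (rule sum.cong[OF refl]) (rule sum_swap3[symmetric])
  finally show ?thesis .
qed

lemma acs_facts:
  assumes "alg_curv_tensor R"
  shows "R i j k l = - R j i k l" "R i j k l = - R i j l k" "R i j k l = R k l i j"
  using assms unfolding alg_curv_tensor_def by blast+

lemma Rbar_sym:
  assumes "alg_curv_tensor R" "\<forall>i j. h i j = h j i"
  shows "Rbar R h j i = Rbar R h i j"
proof -
  have r: "R j k l i = R i l k j" for k l
    using acs_facts[OF assms(1)] by metis
  have "Rbar R h j i = (\<Sum>k\<in>UNIV. \<Sum>l\<in>UNIV. R i l k j * h l k)"
    unfolding Rbar_def using assms(2) r by simp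
  also have "\<dots> = (\<Sum>l\<in>UNIV. \<Sum>k\<in>UNIV. R i l k j * h l k)" by (rule sum.swap)
  also have "\<dots> = Rbar R h i j" unfolding Rbar_def by simp
  finally show ?thesis .
qed

lemma Rbar_selfadj:
  assumes "alg_curv_tensor R"
  shows "inner2 (Rbar R h) g = inner2 h (Rbar R g)"
proof -
  have r: "R k i j l = R i k l j" for i j k l
    using acs_facts[OF assms(1)] by metis
  have "inner2 (Rbar R h) g = (\<Sum>i\<in>UNIV. \<Sum>j\<in>UNIV. \<Sum>k\<in>UNIV. \<Sum>l\<in>UNIV. R i k l j * h k l * g i j)"
    unfolding inner2_def Rbar_def by (simp add: sum_distrib_right)
  also have "\<dots> = (\<Sum>k\<in>UNIV. \<Sum>l\<in>UNIV. \<Sum>i\<in>UNIV. \<Sum>j\<in>UNIV. R i k l j * h k l * g i j)"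
    by (rule sum_swap4)
  also have "\<dots> = inner2 h (Rbar R g)"
    unfolding inner2_def Rbar_def by (simp add: sum_distrib_left r mult_ac)
  finally show ?thesis .
qed

lemma trace2_proj0: "trace2 (proj0 (X::('n::finite) tensor2)) = 0"
proof -
  have "trace2 (proj0 X) = (\<Sum>i\<in>UNIV. X i i - trace2 X / real (card (UNIV :: 'n set)))"
    unfolding proj0_def trace2_def by simp
  also have "\<dots> = trace2 X - real (card (UNIV :: 'n set)) * (trace2 X / real (card (UNIV :: 'n set)))"
    by (simp add: sum_subtractf trace2_def)
  also have "\<dots> = 0" using card_pos[where 'n='n] by simp
  finally show ?thesis .
qed

lemma proj0_inner:
  fixes X :: "('n::finite) tensor2"
  assumes "trace2 e = 0"
  shows "inner2 (proj0 X) e = inner2 X e"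
proof -
  have "proj0 X = (\<lambda>i j. X i j - (\<lambda>i j. if i = j then trace2 X / real (card (UNIV :: 'n set)) else 0) i j)"
    unfolding proj0_def by simp
  then have "inner2 (proj0 X) e = inner2 X e - (trace2 X / real (card (UNIV :: 'n set))) * trace2 e"
    by (simp only: inner2_diff_left inner2_diagterm)
  then show ?thesis using assms by simp
qed

lemma curv_op2_S:
  assumes "alg_curv_tensor R" "traceless_sym h"
  shows "traceless_sym (curv_op2 R h)"
proof -
  have s: "\<forall>i j. h i j = h j i" using assms(2) unfolding traceless_sym_def by auto
  show ?thesis unfolding traceless_sym_def curv_op2_def
    using trace2_proj0 Rbar_sym[OF assms(1) s] by (auto simp: proj0_def)
qed

lemma curv_op2_inner:
  assumes "traceless_sym e"
  shows "inner2 (curv_op2 R h) e = inner2 (Rbar R h) e"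
  using assms unfolding curv_op2_def traceless_sym_def by (simp add: proj0_inner)

lemma Rbar_lin: "Rbar R (\<lambda>i j. a i j + t * b i j) = (\<lambda>i j. Rbar R a i j + t * Rbar R b i j)"
  unfolding Rbar_def by (simp add: distrib_left sum.distrib sum_distrib_left mult_ac)

lemma Rbar_scale: "Rbar R (\<lambda>i j. t * b i j) = (\<lambda>i j. t * Rbar R b i j)"
  unfolding Rbar_def by (simp add: sum_distrib_left mult_ac)

lemma quad_zero:
  fixes a b :: real
  assumes "\<forall>t. 0 \<le> a * t + b * t\<^sup>2"
  shows "a = 0"
proof (rule ccontr)
  assume a: "a \<noteq> 0"
  define c where "c = \<bar>b\<bar> + 1"
  have c: "c > 0" "\<bar>b\<bar> \<le> c" unfolding c_def by auto
  define t where "t = - a / (2 * c)"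
  have "0 \<le> a * t + b * t\<^sup>2" using assms by blast
  also have "b * t\<^sup>2 \<le> c * t\<^sup>2"
    using c by (intro mult_right_mono) auto
  then have "a * t + b * t\<^sup>2 \<le> a * t + c * t\<^sup>2" by simp
  also have "a * t + c * t\<^sup>2 = - a\<^sup>2 / (4 * c)"
    unfolding t_def using c by (simp add: field_simps power2_eq_square)
  also have "\<dots> < 0" using a c by (simp add: field_simps)
  finally show False by simp
qed


definition qf :: "('n::finite) tensor4 \<Rightarrow> 'n tensor2 \<Rightarrow> real" where
  "qf R h = inner2 (Rbar R h) h"

lemma inner2_axpy_left: "inner2 (\<lambda>i j. a i j + t * b i j) k = inner2 a k + t * inner2 b k"
  using inner2_add_left[of a "\<lambda>i j. t * b i j"] inner2_scale_left[of t b] by simp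

lemma inner2_axpy_right: "inner2 k (\<lambda>i j. a i j + t * b i j) = inner2 k a + t * inner2 k b"
  using inner2_add_right[of k a "\<lambda>i j. t * b i j"] inner2_scale_right[of k t b] by simp

lemma qf_expand:
  assumes "alg_curv_tensor R"
  shows "qf R (\<lambda>i j. m i j + t * w i j) = qf R m + 2 * t * inner2 (Rbar R m) w + t\<^sup>2 * qf R w"
proof -
  have sa: "inner2 (Rbar R w) m = inner2 (Rbar R m) w"
    using Rbar_selfadj[OF assms, of w m] inner2_sym by metis
  show ?thesis unfolding qf_def Rbar_lin inner2_axpy_left inner2_axpy_right sa
    by (simp add: algebra_simps power2_eq_square)
qed

lemma qf_scale: "qf R (\<lambda>i j. c * h i j) = c\<^sup>2 * qf R h"
  unfolding qf_def Rbar_scale inner2_scale_left inner2_scale_right by (simp add: power2_eq_square)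

lemma inner2_expand:
  "inner2 (\<lambda>i j. m i j + t * w i j) (\<lambda>i j. m i j + t * w i j)
     = inner2 m m + 2 * t * inner2 m w + t\<^sup>2 * inner2 w w"
  unfolding inner2_axpy_left inner2_axpy_right
  by (simp add: inner2_sym[of w m] algebra_simps power2_eq_square)

lemma eigen_from_min:
  fixes e :: "nat \<Rightarrow> ('n::finite) tensor2"
  assumes acs: "alg_curv_tensor R"
    and Se: "\<forall>a<k. traceless_sym (e a)"
    and eig: "\<forall>a<k. curv_op2 R (e a) = (\<lambda>i j. lam a * e a i j)"
    and Sm: "traceless_sym m" and mm: "inner2 m m = 1" and mo: "\<forall>a<k. inner2 m (e a) = 0"
    and mini: "\<forall>h. traceless_sym h \<and> inner2 h h = 1 \<and> (\<forall>a<k. inner2 h (e a) = 0) \<longrightarrow> qf R m \<le> qf R h"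
  shows "curv_op2 R m = (\<lambda>i j. qf R m * m i j)"
proof -
  define \<mu> where "\<mu> = qf R m"
  have key: "inner2 (Rbar R m) w = \<mu> * inner2 m w"
    if Sw: "traceless_sym w" and wo: "\<forall>a<k. inner2 w (e a) = 0" for w
  proof -
    have ineq: "\<mu> * inner2 x x \<le> qf R x" if x: "x = (\<lambda>i j. m i j + t * w i j)" for x t
    proof -
      have Sx: "traceless_sym x" unfolding x
        by (intro traceless_sym_add traceless_sym_scale Sm Sw)
      have xo: "\<forall>a<k. inner2 x (e a) = 0" unfolding x inner2_axpy_left using mo wo by simp
      show ?thesis
      proof (cases "inner2 x x = 0")
        case True
        then have "x = (\<lambda>i j. 0)" by (rule inner2_self_eq0)
        then have "qf R x = 0" unfolding qf_def inner2_def by simp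
        then show ?thesis using True by simp
      next
        case False
        have pos: "0 < inner2 x x" using False inner2_self_nonneg[of x] by linarith
        define c where "c = 1 / sqrt (inner2 x x)"
        have h1: "traceless_sym (\<lambda>i j. c * x i j)" by (rule traceless_sym_scale[OF Sx])
        have h2: "inner2 (\<lambda>i j. c * x i j) (\<lambda>i j. c * x i j) = 1"
          unfolding c_def by (rule normalize[OF False])
        have h3: "\<forall>a<k. inner2 (\<lambda>i j. c * x i j) (e a) = 0"
          unfolding inner2_scale_left using xo by simp
        have "\<mu> \<le> qf R (\<lambda>i j. c * x i j)" unfolding \<mu>_def
          using mini h1 h2 h3 by blast
        also have "\<dots> = qf R x / inner2 x x" unfolding qf_scale c_def
          using pos by (simp add: power_divide)
        finally show ?thesis using pos by (simp add: field_simps)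
      qed
    qed
    have "\<forall>t. 0 \<le> (2 * (inner2 (Rbar R m) w - \<mu> * inner2 m w)) * t + (qf R w - \<mu> * inner2 w w) * t\<^sup>2"
    proof
      fix t
      have "\<mu> * (inner2 m m + 2 * t * inner2 m w + t\<^sup>2 * inner2 w w)
          \<le> qf R m + 2 * t * inner2 (Rbar R m) w + t\<^sup>2 * qf R w"
        using ineq[OF refl, of t] unfolding inner2_expand qf_expand[OF acs] .
      then show "0 \<le> (2 * (inner2 (Rbar R m) w - \<mu> * inner2 m w)) * t + (qf R w - \<mu> * inner2 w w) * t\<^sup>2"
        using mm unfolding \<mu>_def by (simp add: algebra_simps)
    qed
    from quad_zero[OF this] show ?thesis by simp
  qed
  define w where "w = (\<lambda>i j. curv_op2 R m i j - \<mu> * m i j)"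
  have Sw: "traceless_sym w" unfolding w_def
    by (intro traceless_sym_diff traceless_sym_scale curv_op2_S[OF acs] Sm)
  have wo: "\<forall>a<k. inner2 w (e a) = 0"
  proof (intro allI impI)
    fix a assume a: "a < k"
    have "inner2 (curv_op2 R m) (e a) = inner2 m (Rbar R (e a))"
      using curv_op2_inner Se a Rbar_selfadj[OF acs] by metis
    also have "\<dots> = inner2 m (curv_op2 R (e a))"
      using curv_op2_inner[OF Sm, of R "e a"] inner2_sym by metis
    also have "\<dots> = 0" using eig a mo by (simp add: inner2_scale_right)
    finally show "inner2 w (e a) = 0" unfolding w_def inner2_diff_left inner2_scale_left
      using mo a by simp
  qed
  have "inner2 (Rbar R m) w = \<mu> * inner2 m w" by (rule key[OF Sw wo])
  then have "inner2 (curv_op2 R m) w - \<mu> * inner2 m w = 0"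
    using curv_op2_inner[OF Sw] by simp
  then have "inner2 w w = 0" unfolding w_def inner2_diff_left inner2_scale_left by simp
  then have "w = (\<lambda>i j. 0)" by (rule inner2_self_eq0)
  then show ?thesis unfolding \<mu>_def w_def by (metis eq_iff_diff_eq_0)
qed


definition fv :: "real^('n::finite \<times> 'n) \<Rightarrow> 'n tensor2" where
  "fv x = (\<lambda>i j. x $ (i, j))"

lemma fv_surj: "fv (\<chi> p. h (fst p) (snd p)) = h"
  unfolding fv_def by simp

lemma exists_min:
  fixes e :: "nat \<Rightarrow> ('n::finite) tensor2" and k :: nat
  defines "P \<equiv> (\<lambda>h. traceless_sym h \<and> inner2 h h = 1 \<and> (\<forall>a<k. inner2 h (e a) = 0))"
  assumes ex: "\<exists>h. P h"
  shows "\<exists>m. P m \<and> (\<forall>h. P h \<longrightarrow> qf R m \<le> qf R h)"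
proof -
  define K where "K = {x::real^('n \<times> 'n). P (fv x)}"
  have cl: "closed K"
  proof -
    have c1: "closed {x::real^('n \<times> 'n). \<forall>i j. fv x i j = fv x j i}"
      unfolding fv_def
      by (intro closed_Collect_all closed_Collect_eq continuous_intros)
    have c2: "closed {x::real^('n \<times> 'n). trace2 (fv x) = 0}"
      unfolding fv_def trace2_def
      by (intro closed_Collect_eq continuous_intros)
    have c3: "closed {x::real^('n \<times> 'n). inner2 (fv x) (fv x) = 1}"
      unfolding fv_def inner2_def
      by (intro closed_Collect_eq continuous_intros)
    have c4: "closed {x::real^('n \<times> 'n). \<forall>a. a < k \<longrightarrow> inner2 (fv x) (e a) = 0}"
    proof (intro closed_Collect_all closed_Collect_imp)
      fix a show "open {x::real^('n \<times> 'n). a < k}" by (cases "a < k") simp_all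
      show "closed {x::real^('n \<times> 'n). inner2 (fv x) (e a) = 0}"
        unfolding fv_def inner2_def
        by (intro closed_Collect_eq continuous_intros)
    qed
    have "K = {x. \<forall>i j. fv x i j = fv x j i} \<inter> {x. trace2 (fv x) = 0} \<inter> {x. inner2 (fv x) (fv x) = 1}
              \<inter> {x. \<forall>a. a < k \<longrightarrow> inner2 (fv x) (e a) = 0}"
      unfolding K_def P_def traceless_sym_def by auto
    then show ?thesis using c1 c2 c3 c4
      by (simp only: closed_Int)
  qed
  have bd: "bounded K"
    unfolding bounded_iff
  proof (intro exI ballI)
    fix x assume "x \<in> K"
    then have one: "inner2 (fv x) (fv x) = 1" unfolding K_def P_def by auto
    have comp: "\<bar>x $ p\<bar> \<le> 1" for p
    proof -
      obtain i j where p: "p = (i, j)" by (cases p)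
      have "(x $ (i, j))\<^sup>2 \<le> (\<Sum>j'\<in>UNIV. (x $ (i, j'))\<^sup>2)"
        by (rule member_le_sum) auto
      also have "\<dots> \<le> (\<Sum>i'\<in>UNIV. \<Sum>j'\<in>UNIV. (x $ (i', j'))\<^sup>2)"
        by (rule member_le_sum[where f = "\<lambda>i'. \<Sum>j'\<in>UNIV. (x $ (i', j'))\<^sup>2"])
           (auto intro: sum_nonneg)
      also have "\<dots> = 1" using one unfolding inner2_def fv_def by (simp add: power2_eq_square)
      finally show ?thesis unfolding p by (simp add: abs_square_le_1)
    qed
    have "norm x \<le> (\<Sum>p\<in>UNIV. \<bar>x $ p\<bar>)" by (rule norm_le_l1_cart)
    also have "\<dots> \<le> (\<Sum>p\<in>(UNIV::('n \<times> 'n) set). 1)" by (intro sum_mono comp)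
    finally show "norm x \<le> real (card (UNIV::('n \<times> 'n) set))" by simp
  qed
  have cp: "compact K" using cl bd by (simp add: compact_eq_bounded_closed)
  obtain h0 where "P h0" using ex by blast
  moreover have "fv (\<chi> p. h0 (fst p) (snd p)) = h0" by (rule fv_surj)
  ultimately have "(\<chi> p. h0 (fst p) (snd p)) \<in> K" unfolding K_def by simp
  then have ne: "K \<noteq> {}" by blast
  have ct: "continuous_on K (\<lambda>x. qf R (fv x))"
    unfolding qf_def fv_def inner2_def Rbar_def by (intro continuous_intros)
  obtain x0 where x0: "x0 \<in> K" "\<forall>y\<in>K. qf R (fv x0) \<le> qf R (fv y)"
    using continuous_attains_inf[OF cp ne ct] by blast
  show ?thesis
  proof (intro exI conjI allI impI)
    show "P (fv x0)" using x0(1) unfolding K_def by simp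
    fix h assume "P h"
    moreover have fs: "fv (\<chi> p. h (fst p) (snd p)) = h" by (rule fv_surj)
    ultimately have "(\<chi> p. h (fst p) (snd p)) \<in> K" unfolding K_def by simp
    then have "qf R (fv x0) \<le> qf R (fv (\<chi> p. h (fst p) (snd p)))" using x0(2) by blast
    then show "qf R (fv x0) \<le> qf R h" unfolding fs .
  qed
qed


lemma spectral_induct:
  fixes R :: "('n::finite) tensor4"
  assumes acs: "alg_curv_tensor R"
  shows "k \<le> dimS20 (card (UNIV::'n set)) \<Longrightarrow>
    \<exists>e lam. orthonormal_fam e k \<and> (\<forall>a<k. traceless_sym (e a)) \<and>
      (\<forall>a<k. curv_op2 R (e a) = (\<lambda>i j. lam a * e a i j)) \<and>
      (\<forall>a b. a \<le> b \<longrightarrow> b < k \<longrightarrow> lam a \<le> (lam b :: real)) \<and>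
      (0 < k \<longrightarrow> (\<forall>h. traceless_sym h \<and> inner2 h h = 1 \<and> (\<forall>a<k - 1. inner2 h (e a) = 0)
          \<longrightarrow> lam (k - 1) \<le> qf R h))"
proof (induction k)
  case 0
  show ?case by (rule exI[of _ "\<lambda>a i j. 0"], rule exI[of _ "\<lambda>a. 0"]) (simp add: orthonormal_fam_def)
next
  case (Suc k)
  then have kN: "k < dimS20 (card (UNIV::'n set))" by simp
  then obtain e lam where on: "orthonormal_fam e k" and Se: "\<forall>a<k. traceless_sym (e a)"
    and eig: "\<forall>a<k. curv_op2 R (e a) = (\<lambda>i j. lam a * e a i j)"
    and srt: "\<forall>a b. a \<le> b \<longrightarrow> b < k \<longrightarrow> lam a \<le> lam b"
    and mn: "0 < k \<longrightarrow> (\<forall>h. traceless_sym h \<and> inner2 h h = 1 \<and> (\<forall>a<k - 1. inner2 h (e a) = 0)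
          \<longrightarrow> lam (k - 1) \<le> qf R h)"
    using Suc.IH by auto
  have "\<exists>h. traceless_sym h \<and> inner2 h h = 1 \<and> (\<forall>a<k. inner2 h (e a) = 0)"
    by (rule exists_orth[OF on Se kN])
  then obtain m where Sm: "traceless_sym m" and mm: "inner2 m m = 1" and mo: "\<forall>a<k. inner2 m (e a) = 0"
    and mini: "\<forall>h. traceless_sym h \<and> inner2 h h = 1 \<and> (\<forall>a<k. inner2 h (e a) = 0) \<longrightarrow> qf R m \<le> qf R h"
    using exists_min[of k e R] by blast
  have em: "curv_op2 R m = (\<lambda>i j. qf R m * m i j)"
    by (rule eigen_from_min[OF acs Se eig Sm mm mo mini])
  define e' where "e' = e(k := m)"
  define lam' where "lam' = lam(k := qf R m)"
  show ?case
  proof (intro exI conjI)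
    show "orthonormal_fam e' (Suc k)" unfolding orthonormal_fam_def
    proof (intro allI impI)
      fix a b assume a: "a < Suc k" and b: "b < Suc k"
      show "inner2 (e' a) (e' b) = (if a = b then 1 else 0)"
      proof (cases "a = k")
        case True
        then show ?thesis
        proof (cases "b = k")
          case True with \<open>a = k\<close> show ?thesis by (simp add: e'_def mm)
        next
          case False then have "b < k" using b by simp
          then show ?thesis using \<open>a = k\<close> mo False by (simp add: e'_def)
        qed
      next
        case False then have a': "a < k" using a by simp
        show ?thesis
        proof (cases "b = k")
          case True then show ?thesis using a' mo False by (simp add: e'_def inner2_sym[of "e a"])
        next
          case False then have "b < k" using b by simp
          then show ?thesis using a' on \<open>a \<noteq> k\<close> False
            unfolding orthonormal_fam_def by (simp add: e'_def)
        qed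
      qed
    qed
    show "\<forall>a<Suc k. traceless_sym (e' a)"
      using Se Sm by (auto simp: e'_def less_Suc_eq)
    show "\<forall>a<Suc k. curv_op2 R (e' a) = (\<lambda>i j. lam' a * e' a i j)"
      using eig em by (auto simp: e'_def lam'_def less_Suc_eq)
    show "\<forall>a b. a \<le> b \<longrightarrow> b < Suc k \<longrightarrow> lam' a \<le> lam' b"
    proof (intro allI impI)
      fix a b assume ab: "a \<le> b" and b: "b < Suc k"
      show "lam' a \<le> lam' b"
      proof (cases "b = k")
        case False
        then show ?thesis using ab b srt by (auto simp: lam'_def)
      next
        case True
        show ?thesis
        proof (cases "a = k")
          case True then show ?thesis using \<open>b = k\<close> by simp
        next
          case False
          then have ak: "a < k" using ab \<open>b = k\<close> by simp
          then have k0: "0 < k" by simp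
          have "lam a \<le> lam (k - 1)" using srt ak by auto
          also have "lam (k - 1) \<le> qf R m"
            using mn k0 Sm mm mo by auto
          finally show ?thesis using \<open>b = k\<close> False by (simp add: lam'_def)
        qed
      qed
    qed
    show "0 < Suc k \<longrightarrow> (\<forall>h. traceless_sym h \<and> inner2 h h = 1 \<and> (\<forall>a<Suc k - 1. inner2 h (e' a) = 0)
          \<longrightarrow> lam' (Suc k - 1) \<le> qf R h)"
      using mini by (auto simp: e'_def lam'_def)
  qed
qed

lemma eigenlist_exists:
  fixes R :: "('n::finite) tensor4"
  assumes acs: "alg_curv_tensor R"
  shows "is_eigenvalue_list R (curv_op2_eigenvalues R)"
proof -
  let ?N = "dimS20 (card (UNIV::'n set))"
  obtain e lam where on: "orthonormal_fam e ?N" and Se: "\<forall>a<?N. traceless_sym (e a)"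
    and eig: "\<forall>a<?N. curv_op2 R (e a) = (\<lambda>i j. lam a * e a i j)"
    and srt: "\<forall>a b. a \<le> b \<longrightarrow> b < ?N \<longrightarrow> lam a \<le> (lam b :: real)"
    using spectral_induct[OF acs, of ?N] by auto
  have "is_eigenvalue_list R (map lam [0..<?N])"
    unfolding is_eigenvalue_list_def
  proof (intro conjI)
    show "length (map lam [0..<?N]) = ?N" by simp
    show "sorted (map lam [0..<?N])"
      unfolding sorted_iff_nth_mono using srt by simp
    show "\<exists>e. (\<forall>a<?N. traceless_sym (e a)) \<and>
        (\<forall>a<?N. \<forall>b<?N. inner2 (e a) (e b) = (if a = b then 1 else 0)) \<and>
        (\<forall>a<?N. curv_op2 R (e a) = (\<lambda>i j. map lam [0..<?N] ! a * e a i j))"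
      using Se on eig unfolding orthonormal_fam_def by (intro exI[of _ e]) auto
  qed
  then show ?thesis unfolding curv_op2_eigenvalues_def by (rule someI)
qed


definition scal :: "('n::finite) tensor4 \<Rightarrow> real" where
  "scal R = (\<Sum>i\<in>UNIV. \<Sum>j\<in>UNIV. R i j i j)"

lemma sum_if_out: "(\<Sum>k\<in>A. if P then f k else 0) = (if P then \<Sum>k\<in>A. f k else (0::real))"
  by (cases P) simp_all

lemma delta2:
  fixes F :: "'n::finite \<Rightarrow> 'n \<Rightarrow> real"
  shows "(\<Sum>k\<in>UNIV. \<Sum>l\<in>UNIV. F k l * (if a = k \<and> b = l then 1 else 0)) = F a b"
proof -
  have "\<And>k. (\<Sum>l\<in>UNIV. F k l * (if a = k \<and> b = l then 1 else 0)) = (if a = k then F k b else 0)"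
  proof -
    fix k show "(\<Sum>l\<in>UNIV. F k l * (if a = k \<and> b = l then 1 else 0)) = (if a = k then F k b else 0)"
    proof (cases "a = k")
      case True
      then have "(\<Sum>l\<in>UNIV. F k l * (if a = k \<and> b = l then 1 else 0)) = (\<Sum>l\<in>UNIV. if b = l then F k l else 0)"
        by (intro sum.cong) auto
      then show ?thesis using True by (simp add: sum.delta')
    qed simp
  qed
  then show ?thesis by (simp add: sum.delta')
qed

lemma symP_Ebas_eq:
  fixes k l i j :: "'n::finite"
  shows "symP (Ebas k l) i j = (1/2) * (if i = k \<and> j = l then 1 else 0) + (1/2) * (if j = k \<and> i = l then 1 else 0)
     - (1 / real (card (UNIV :: 'n set))) * ((if i = j then 1 else 0) * (if k = l then 1 else 0))"
  unfolding symP_def trace2_Ebas by (auto simp: Ebas_def)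

lemma sum_R_symP:
  fixes R :: "('n::finite) tensor4"
  assumes acs: "alg_curv_tensor R"
  shows "(\<Sum>i\<in>UNIV. \<Sum>j\<in>UNIV. \<Sum>k\<in>UNIV. \<Sum>l\<in>UNIV. R i k l j * symP (Ebas k l) i j)
     = (1/2 + 1 / real (card (UNIV :: 'n set))) * scal R"
proof -
  let ?n = "real (card (UNIV :: 'n set))"
  have A: "(\<Sum>i\<in>UNIV. \<Sum>j\<in>UNIV. \<Sum>k\<in>UNIV. \<Sum>l\<in>UNIV. R i k l j * (if i = k \<and> j = l then 1 else 0)) = 0"
  proof -
    have "(\<Sum>i\<in>UNIV. \<Sum>j\<in>UNIV. \<Sum>k\<in>UNIV. \<Sum>l\<in>UNIV. R i k l j * (if i = k \<and> j = l then 1 else 0))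
       = (\<Sum>i\<in>UNIV. \<Sum>j\<in>(UNIV::'n set). R i i j j)"
      by (intro sum.cong refl) (rule delta2)
    also have "\<dots> = 0"
    proof -
      have "\<And>i j. R i i j j = 0"
      proof -
        fix i j have "R i i j j = - R i i j j" by (rule acs_facts(1)[OF acs])
        then show "R i i j j = 0" by simp
      qed
      then show ?thesis by simp
    qed
    finally show ?thesis .
  qed
  have B: "(\<Sum>i\<in>UNIV. \<Sum>j\<in>UNIV. \<Sum>k\<in>UNIV. \<Sum>l\<in>UNIV. R i k l j * (if j = k \<and> i = l then 1 else 0)) = scal R"
    unfolding scal_def by (intro sum.cong refl) (rule delta2)
  have C: "(\<Sum>i\<in>UNIV. \<Sum>j\<in>UNIV. \<Sum>k\<in>UNIV. \<Sum>l\<in>UNIV. R i k l j * ((if i = j then 1 else 0) * (if k = l then 1 else 0))) = - scal R"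
  proof -
    have "(\<Sum>i\<in>UNIV. \<Sum>j\<in>UNIV. \<Sum>k\<in>UNIV. \<Sum>l\<in>UNIV. R i k l j * ((if i = j then 1 else 0) * (if k = l then 1 else 0)))
        = (\<Sum>i\<in>UNIV. \<Sum>k\<in>(UNIV::'n set). R i k k i)"
      by (simp add: mult_if0 sum_if_out sum.delta)
    also have "\<dots> = (\<Sum>i\<in>UNIV. \<Sum>k\<in>(UNIV::'n set). - R i k i k)"
    proof -
      have "\<And>i k. R i k k i = - R i k i k" by (rule acs_facts(2)[OF acs])
      then show ?thesis by simp
    qed
    finally show ?thesis unfolding scal_def by (simp add: sum_negf)
  qed
  have "(\<Sum>i\<in>UNIV. \<Sum>j\<in>UNIV. \<Sum>k\<in>UNIV. \<Sum>l\<in>UNIV. R i k l j * symP (Ebas k l) i j)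
     = (\<Sum>i\<in>UNIV. \<Sum>j\<in>UNIV. \<Sum>k\<in>UNIV. \<Sum>l\<in>UNIV.
          (1/2) * (R i k l j * (if i = k \<and> j = l then 1 else 0))
        + (1/2) * (R i k l j * (if j = k \<and> i = l then 1 else 0))
        - (1/?n) * (R i k l j * ((if i = j then 1 else 0) * (if k = l then 1 else 0))))"
    unfolding symP_Ebas_eq by (intro sum.cong refl) (simp only: algebra_simps)
  also have "\<dots> = (1/2) * (\<Sum>i\<in>UNIV. \<Sum>j\<in>UNIV. \<Sum>k\<in>UNIV. \<Sum>l\<in>UNIV. R i k l j * (if i = k \<and> j = l then 1 else 0))
     + (1/2) * (\<Sum>i\<in>UNIV. \<Sum>j\<in>UNIV. \<Sum>k\<in>UNIV. \<Sum>l\<in>UNIV. R i k l j * (if j = k \<and> i = l then 1 else 0))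
     - (1/?n) * (\<Sum>i\<in>UNIV. \<Sum>j\<in>UNIV. \<Sum>k\<in>UNIV. \<Sum>l\<in>UNIV. R i k l j * ((if i = j then 1 else 0) * (if k = l then 1 else 0)))"
    by (simp only: sum.distrib sum_subtractf sum_distrib_left)
  also have "\<dots> = (1/2) * 0 + (1/2) * scal R - (1/?n) * (- scal R)"
    unfolding A B C by (rule refl)
  finally show ?thesis by (simp add: algebra_simps)
qed


definition dot :: "('n::finite \<Rightarrow> real) \<Rightarrow> ('n \<Rightarrow> real) \<Rightarrow> real" where
  "dot x y = (\<Sum>i\<in>UNIV. x i * y i)"

definition bil :: "('n::finite) tensor2 \<Rightarrow> ('n \<Rightarrow> real) \<Rightarrow> ('n \<Rightarrow> real) \<Rightarrow> real" where
  "bil h a b = (\<Sum>i\<in>UNIV. \<Sum>j\<in>UNIV. h i j * a i * b j)"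

definition sym2 :: "('n::finite \<Rightarrow> real) \<Rightarrow> ('n \<Rightarrow> real) \<Rightarrow> 'n tensor2" where
  "sym2 a b = (\<lambda>i j. (a i * b j + b i * a j) / 2)"

definition R4 :: "('n::finite) tensor4 \<Rightarrow> ('n \<Rightarrow> real) \<Rightarrow> ('n \<Rightarrow> real) \<Rightarrow> ('n \<Rightarrow> real) \<Rightarrow> ('n \<Rightarrow> real) \<Rightarrow> real" where
  "R4 R a b c d = (\<Sum>i\<in>UNIV. \<Sum>j\<in>UNIV. \<Sum>k\<in>UNIV. \<Sum>l\<in>UNIV. R i j k l * a i * b j * c k * d l)"

lemma sum_prod2: "(\<Sum>i\<in>A. \<Sum>j\<in>B. f i * g j) = (\<Sum>i\<in>A. f i) * (\<Sum>j\<in>B. (g j :: real))"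
  by (simp add: sum_product)

lemma dot_sym: "dot x y = dot y x" unfolding dot_def by (simp add: mult.commute)

lemma inner2_sym2_right:
  "inner2 h (sym2 a b) = (bil h a b + bil h b a) / 2"
proof -
  have "inner2 h (sym2 a b) = (\<Sum>i\<in>UNIV. \<Sum>j\<in>UNIV. (1/2) * (h i j * a i * b j) + (1/2) * (h i j * b i * a j))"
    unfolding inner2_def sym2_def by (intro sum.cong refl) (simp add: algebra_simps)
  also have "\<dots> = (1/2) * bil h a b + (1/2) * bil h b a"
    unfolding bil_def by (simp only: sum.distrib sum_distrib_left)
  finally show ?thesis by simp
qed

lemma inner2_sym2_right_sym:
  assumes "\<forall>i j. h i j = h j i"
  shows "inner2 h (sym2 a b) = bil h a b"
proof -
  have "bil h b a = (\<Sum>i\<in>UNIV. \<Sum>j\<in>UNIV. h j i * a j * b i)" unfolding bil_def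
    using assms by (simp add: mult_ac)
  also have "\<dots> = bil h a b" unfolding bil_def by (rule sum.swap)
  finally show ?thesis unfolding inner2_sym2_right by simp
qed

lemma inner2_sym2_self:
  "inner2 (sym2 a b) (sym2 a b) = (dot a a * dot b b + (dot a b)\<^sup>2) / 2"
proof -
  have "inner2 (sym2 a b) (sym2 a b) = (\<Sum>i\<in>UNIV. \<Sum>j\<in>UNIV.
      (1/4) * ((a i * a i) * (b j * b j)) + (1/4) * ((b i * b i) * (a j * a j)) + (1/2) * ((a i * b i) * (a j * b j)))"
    unfolding inner2_def sym2_def by (intro sum.cong refl) (simp add: algebra_simps power2_eq_square)
  also have "\<dots> = (1/4) * (dot a a * dot b b) + (1/4) * (dot b b * dot a a) + (1/2) * (dot a b * dot a b)"
    unfolding dot_def sum_prod2[symmetric]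
    by (simp only: sum.distrib sum_distrib_left)
  finally show ?thesis by (simp add: algebra_simps power2_eq_square)
qed

lemma bil_sym: "\<forall>i j. h i j = h j i \<Longrightarrow> bil h a b = bil h b a"
proof -
  assume s: "\<forall>i j. h i j = h j i"
  have "bil h b a = (\<Sum>i\<in>UNIV. \<Sum>j\<in>UNIV. h j i * a j * b i)" unfolding bil_def
    using s by (simp add: mult_ac)
  also have "\<dots> = bil h a b" unfolding bil_def by (rule sum.swap)
  finally show ?thesis by simp
qed

lemma antisym_quad:
  fixes A :: "'n::finite \<Rightarrow> 'n \<Rightarrow> real"
  assumes "\<And>i k. A i k = - A k i"
  shows "(\<Sum>i\<in>UNIV. \<Sum>k\<in>UNIV. A i k * v i * v k) = 0"
proof -
  let ?S = "(\<Sum>i\<in>UNIV. \<Sum>k\<in>UNIV. A i k * v i * v k)"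
  have "?S = (\<Sum>k\<in>UNIV. \<Sum>i\<in>UNIV. A i k * v i * v k)" by (rule sum.swap)
  also have "\<dots> = (\<Sum>k\<in>UNIV. \<Sum>i\<in>UNIV. - (A k i * v k * v i))"
  proof (intro sum.cong refl)
    fix k i
    have "A i k = - A k i" by (rule assms)
    then show "A i k * v i * v k = - (A k i * v k * v i)" by (simp add: mult_ac)
  qed
  also have "\<dots> = - ?S" by (simp add: sum_negf)
  finally show ?thesis by simp
qed


lemma inner2_sym2_sym2:
  "inner2 (sym2 a b) (sym2 c d) = (dot a c * dot b d + dot a d * dot b c) / 2"
proof -
  have "inner2 (sym2 a b) (sym2 c d) = (\<Sum>i\<in>UNIV. \<Sum>j\<in>UNIV.
      (1/4) * ((a i * c i) * (b j * d j)) + (1/4) * ((a i * d i) * (b j * c j))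
    + (1/4) * ((b i * c i) * (a j * d j)) + (1/4) * ((b i * d i) * (a j * c j)))"
    unfolding inner2_def sym2_def by (intro sum.cong refl) (simp add: algebra_simps)
  also have "\<dots> = (1/4) * (dot a c * dot b d) + (1/4) * (dot a d * dot b c)
     + (1/4) * (dot b c * dot a d) + (1/4) * (dot b d * dot a c)"
    unfolding dot_def sum_prod2[symmetric]
    by (simp only: sum.distrib sum_distrib_left)
  finally show ?thesis by (simp add: algebra_simps)
qed

lemma sym2_symm: "sym2 a b i j = sym2 a b j i"
  unfolding sym2_def by (simp add: algebra_simps)

lemma trace2_sym2: "trace2 (sym2 a b) = dot a b"
  unfolding trace2_def sym2_def dot_def by (simp add: mult.commute sum_divide_distrib[symmetric])

definition mI :: "('n::finite) tensor2" where
  "mI = (\<lambda>i j. if i = j then -1 else 0)"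

lemma inner2_mI_left: "inner2 mI h = - trace2 h"
  unfolding inner2_def mI_def trace2_def by (simp add: if_mult0 sum.delta sum_negf)

lemma inner2_mI_right: "inner2 h mI = - trace2 h"
  using inner2_mI_left inner2_sym by metis

definition Hv :: "('n::finite \<Rightarrow> real) \<Rightarrow> 'n tensor2" where
  "Hv v = (\<lambda>i j. mI i j + real (card (UNIV::'n set)) * sym2 v v i j)"

definition uv :: "('n::finite \<Rightarrow> real) \<Rightarrow> 'n \<Rightarrow> 'n \<Rightarrow> real" where
  "uv v i = (\<lambda>k. (if i = k then 1 else 0) - v i * v k)"

definition Xv :: "('n::finite \<Rightarrow> real) \<Rightarrow> 'n \<Rightarrow> 'n tensor2" where
  "Xv v i = sym2 (uv v i) v"

lemma dot_uv_v: "dot (uv v i) v = v i - v i * dot v v"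
proof -
  have "dot (uv v i) v = (\<Sum>k\<in>UNIV. (if i = k then v k else 0) - v i * (v k * v k))"
    unfolding dot_def uv_def by (intro sum.cong refl) (auto simp: algebra_simps)
  also have "\<dots> = v i - v i * dot v v"
    unfolding dot_def by (simp add: sum_subtractf sum.delta sum_distrib_left)
  finally show ?thesis .
qed

lemma dot_uv_uv: "dot (uv v i) (uv v i) = 1 - 2 * (v i)\<^sup>2 + (v i)\<^sup>2 * dot v v"
proof -
  have "dot (uv v i) (uv v i) = (\<Sum>k\<in>UNIV. (if i = k then 1 else 0) - 2 * v i * (if i = k then v k else 0) + (v i)\<^sup>2 * (v k * v k))"
    unfolding dot_def uv_def by (intro sum.cong refl) (auto simp: algebra_simps power2_eq_square)
  also have "\<dots> = 1 - 2 * v i * v i + (v i)\<^sup>2 * dot v v"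
    unfolding dot_def by (simp add: sum.distrib sum_subtractf sum.delta sum_distrib_left[symmetric])
  finally show ?thesis by (simp add: power2_eq_square)
qed

lemma Xv_S:
  assumes "dot v v = 1"
  shows "traceless_sym (Xv v i)"
  unfolding traceless_sym_def Xv_def trace2_sym2 dot_uv_v assms using sym2_symm by auto

lemma sum_Xv_self:
  fixes v :: "'n::finite \<Rightarrow> real"
  assumes "dot v v = 1"
  shows "(\<Sum>i\<in>UNIV. inner2 (Xv v i) (Xv v i)) = (real (card (UNIV::('n::finite) set)) - 1) / 2"
proof -
  have "(\<Sum>i\<in>(UNIV::'n set). inner2 (Xv v i) (Xv v i)) = (\<Sum>i\<in>(UNIV::'n set). (1 - (v i)\<^sup>2) / 2)"
    unfolding Xv_def inner2_sym2_self dot_uv_uv dot_uv_v assms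
    by (intro sum.cong refl) (simp add: dot_sym[of v])
  also have "\<dots> = (real (card (UNIV::'n set)) - dot v v) / 2"
    unfolding dot_def by (simp add: sum_divide_distrib[symmetric] sum_subtractf power2_eq_square)
  finally show ?thesis using assms by simp
qed

lemma Hv_S:
  assumes "dot v v = 1"
  shows "traceless_sym (Hv (v::'n::finite \<Rightarrow> real))"
proof -
  have "trace2 (Hv v) = - real (card (UNIV::'n set)) + real (card (UNIV::'n set)) * dot v v"
    unfolding trace2_def Hv_def sum.distrib
    by (simp add: mI_def trace2_sym2[unfolded trace2_def] sum_distrib_left[symmetric])
  then show ?thesis unfolding traceless_sym_def using assms
    by (auto simp: Hv_def mI_def sym2_symm[of v v])
qed

lemma inner2_Hv_self:
  fixes v :: "'n::finite \<Rightarrow> real"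
  assumes "dot v v = 1"
  shows "inner2 (Hv v) (Hv v) = real (card (UNIV::('n::finite) set)) * (real (card (UNIV::'n set)) - 1)"
proof -
  let ?n = "real (card (UNIV::'n set))"
  have "inner2 (Hv v) (Hv v) = inner2 (mI::'n tensor2) mI + 2 * ?n * inner2 mI (sym2 v v) + ?n\<^sup>2 * inner2 (sym2 v v) (sym2 v v)"
    unfolding Hv_def using inner2_expand[of mI ?n "sym2 v v"] by simp
  also have "inner2 (mI::'n tensor2) mI = ?n" unfolding inner2_mI_left by (simp add: mI_def trace2_def)
  also have "inner2 (mI::'n tensor2) (sym2 v v) = -1" unfolding inner2_mI_left trace2_sym2 assms by simp
  also have "inner2 (sym2 v v) (sym2 v v) = 1" unfolding inner2_sym2_sym2 assms by simp
  finally show ?thesis by (simp add: algebra_simps power2_eq_square)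
qed

lemma inner2_h_Hv:
  fixes h :: "('n::finite) tensor2" and v :: "'n \<Rightarrow> real"
  assumes "traceless_sym h"
  shows "inner2 h (Hv v) = real (card (UNIV::'n set)) * bil h v v"
proof -
  have s: "\<forall>i j. h i j = h j i" and t: "trace2 h = 0" using assms unfolding traceless_sym_def by auto
  show ?thesis unfolding Hv_def inner2_axpy_right inner2_mI_right t inner2_sym2_right_sym[OF s] by simp
qed

lemma inner2_h_Xv:
  fixes h :: "('n::finite) tensor2"
  assumes "\<forall>i j. h i j = h j i"
  shows "inner2 h (Xv v i) = (\<Sum>l\<in>UNIV. h i l * v l) - v i * bil h v v"
proof -
  have "inner2 h (Xv v i) = bil h (uv v i) v" unfolding Xv_def by (rule inner2_sym2_right_sym[OF assms])
  also have "\<dots> = (\<Sum>k\<in>UNIV. \<Sum>l\<in>UNIV. (if i = k then h k l * v l else 0) - v i * (h k l * v k * v l))"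
    unfolding bil_def uv_def by (intro sum.cong refl) (simp add: algebra_simps)
  also have "\<dots> = (\<Sum>l\<in>UNIV. h i l * v l) - v i * bil h v v"
    unfolding bil_def by (simp add: sum_subtractf sum_distrib_left sum_if_out sum.delta)
  finally show ?thesis .
qed


lemma qf_as_sum:
  "qf R X = (\<Sum>i\<in>UNIV. \<Sum>k\<in>UNIV. \<Sum>l\<in>UNIV. \<Sum>j\<in>UNIV. R i k l j * X k l * X i j)"
proof -
  have "qf R X = (\<Sum>i\<in>UNIV. \<Sum>j\<in>UNIV. \<Sum>k\<in>UNIV. \<Sum>l\<in>UNIV. R i k l j * X k l * X i j)"
    unfolding qf_def inner2_def Rbar_def by (simp add: sum_distrib_right)
  also have "\<dots> = (\<Sum>i\<in>UNIV. \<Sum>k\<in>UNIV. \<Sum>l\<in>UNIV. \<Sum>j\<in>UNIV. R i k l j * X k l * X i j)"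
    by (rule sum.cong[OF refl]) (rule sum_swap3)
  finally show ?thesis .
qed

lemma R4_zero12:
  assumes acs: "alg_curv_tensor R"
  shows "R4 R a a c d = 0"
proof -
  define A where "A i j = (\<Sum>k\<in>UNIV. \<Sum>l\<in>UNIV. R i j k l * c k * d l)" for i j
  have "R4 R a a c d = (\<Sum>i\<in>UNIV. \<Sum>j\<in>UNIV. A i j * a i * a j)"
    unfolding R4_def A_def by (simp add: sum_distrib_left sum_distrib_right mult_ac)
  also have "\<dots> = 0"
  proof (rule antisym_quad)
    fix i j
    have "\<And>k l. R i j k l = - R j i k l" by (rule acs_facts(1)[OF acs])
    then show "A i j = - A j i" unfolding A_def by (simp add: sum_negf)
  qed
  finally show ?thesis .
qed

lemma R4_zero34:
  assumes acs: "alg_curv_tensor R"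
  shows "R4 R a b c c = 0"
proof -
  define A where "A k l = (\<Sum>i\<in>UNIV. \<Sum>j\<in>UNIV. R i j k l * a i * b j)" for k l
  have "R4 R a b c c = (\<Sum>k\<in>UNIV. \<Sum>l\<in>UNIV. \<Sum>i\<in>UNIV. \<Sum>j\<in>UNIV. R i j k l * a i * b j * c k * c l)"
    unfolding R4_def by (rule sum_swap4)
  also have "\<dots> = (\<Sum>k\<in>UNIV. \<Sum>l\<in>UNIV. A k l * c k * c l)"
    unfolding A_def by (simp add: sum_distrib_right)
  also have "\<dots> = 0"
  proof (rule antisym_quad)
    fix k l
    have "\<And>i j. R i j k l = - R i j l k" by (rule acs_facts(2)[OF acs])
    then show "A k l = - A l k" unfolding A_def by (simp add: sum_negf)
  qed
  finally show ?thesis .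
qed

lemma R4_pair:
  assumes acs: "alg_curv_tensor R"
  shows "R4 R b a b a = R4 R a b a b"
proof -
  have r: "\<And>i j k l. R i j k l = R j i l k"
  proof -
    fix i j k l
    have "R i j k l = - R j i k l" by (rule acs_facts(1)[OF acs])
    also have "R j i k l = - R j i l k" by (rule acs_facts(2)[OF acs])
    finally show "R i j k l = R j i l k" by simp
  qed
  have "R4 R b a b a = (\<Sum>i\<in>UNIV. \<Sum>j\<in>UNIV. \<Sum>k\<in>UNIV. \<Sum>l\<in>UNIV. R j i l k * b i * a j * b k * a l)"
    unfolding R4_def by (simp only: r[of _ _ _ _])
  also have "\<dots> = (\<Sum>j\<in>UNIV. \<Sum>i\<in>UNIV. \<Sum>k\<in>UNIV. \<Sum>l\<in>UNIV. R j i l k * b i * a j * b k * a l)"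
    by (rule sum.swap)
  also have "\<dots> = (\<Sum>j\<in>UNIV. \<Sum>i\<in>UNIV. \<Sum>l\<in>UNIV. \<Sum>k\<in>UNIV. R j i l k * b i * a j * b k * a l)"
    by (intro sum.cong refl sum.swap)
  also have "\<dots> = R4 R a b a b"
    unfolding R4_def by (simp add: mult_ac)
  finally show ?thesis .
qed

lemma qf_sym2:
  assumes acs: "alg_curv_tensor R"
  shows "qf R (sym2 a b) = R4 R a b a b / 2"
proof -
  have "qf R (sym2 a b) = (\<Sum>i\<in>UNIV. \<Sum>k\<in>UNIV. \<Sum>l\<in>UNIV. \<Sum>j\<in>UNIV.
      (1/4) * (R i k l j * a i * a k * b l * b j) + (1/4) * (R i k l j * b i * a k * b l * a j)
    + (1/4) * (R i k l j * a i * b k * a l * b j) + (1/4) * (R i k l j * b i * b k * a l * a j))"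
    unfolding qf_as_sum sym2_def by (intro sum.cong refl) (simp add: field_simps)
  also have "\<dots> = (1/4) * R4 R a a b b + (1/4) * R4 R b a b a + (1/4) * R4 R a b a b + (1/4) * R4 R b b a a"
    unfolding R4_def by (simp only: sum.distrib sum_distrib_left)
  also have "\<dots> = R4 R a b a b / 2"
    using R4_zero12[OF acs] R4_zero34[OF acs] R4_pair[OF acs] by simp
  finally show ?thesis .
qed

lemma R4_lin1:
  "R4 R (\<lambda>p. x p - c * y p) b c' d = R4 R x b c' d - c * R4 R y b c' d"
proof -
  have "\<And>i j k l. R i j k l * (x i - c * y i) * b j * c' k * d l
      = R i j k l * x i * b j * c' k * d l - c * (R i j k l * y i * b j * c' k * d l)"
    by (simp add: algebra_simps)
  then show ?thesis unfolding R4_def by (simp only: sum_subtractf sum_distrib_left)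
qed

lemma R4_lin3:
  "R4 R a b (\<lambda>p. x p - c * y p) d = R4 R a b x d - c * R4 R a b y d"
proof -
  have "\<And>i j k l. R i j k l * a i * b j * (x k - c * y k) * d l
      = R i j k l * a i * b j * x k * d l - c * (R i j k l * a i * b j * y k * d l)"
    by (simp add: algebra_simps)
  then show ?thesis unfolding R4_def by (simp only: sum_subtractf sum_distrib_left)
qed

lemma R4_delta13:
  fixes R :: "('n::finite) tensor4"
  shows "R4 R (\<lambda>p. if i = p then 1 else 0) b (\<lambda>p. if i = p then 1 else 0) d
     = (\<Sum>j\<in>UNIV. \<Sum>l\<in>UNIV. R i j i l * b j * d l)"
proof -
  have "\<And>p q r s. R p q r s * (if i = p then 1 else 0) * b q * (if i = r then 1 else 0) * d s
      = (if i = p then (if i = r then R p q r s * b q * d s else 0) else 0)"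
    by simp
  then show ?thesis unfolding R4_def by (simp add: sum_if_out sum.delta')
qed

lemma sum_R4_uv:
  fixes R :: "('n::finite) tensor4"
  assumes acs: "alg_curv_tensor R"
  shows "(\<Sum>i\<in>UNIV. R4 R (uv v i) v (uv v i) v) = ricci_form R v"
proof -
  have "R4 R (uv v i) v (uv v i) v = R4 R (\<lambda>p. if i = p then 1 else 0) v (\<lambda>p. if i = p then 1 else 0) v" for i
  proof -
    have u: "uv v i = (\<lambda>p. (if i = p then 1 else 0) - v i * v p)" unfolding uv_def by simp
    show ?thesis unfolding u R4_lin1 R4_lin3
      using R4_zero12[OF acs] R4_zero34[OF acs] by simp
  qed
  then have "(\<Sum>i\<in>UNIV. R4 R (uv v i) v (uv v i) v) = (\<Sum>i\<in>UNIV. \<Sum>j\<in>UNIV. \<Sum>l\<in>UNIV. R i j i l * v j * v l)"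
    by (simp add: R4_delta13)
  also have "\<dots> = (\<Sum>j\<in>UNIV. \<Sum>l\<in>UNIV. \<Sum>i\<in>UNIV. R i j i l * v j * v l)"
    by (rule sum_swap3)
  also have "\<dots> = ricci_form R v"
    unfolding ricci_form_def ricci_def by (simp add: sum_distrib_right)
  finally show ?thesis .
qed

lemma sum_qf_Xv:
  fixes R :: "('n::finite) tensor4"
  assumes acs: "alg_curv_tensor R"
  shows "(\<Sum>i\<in>UNIV. qf R (Xv v i)) = ricci_form R v / 2"
  unfolding Xv_def qf_sym2[OF acs] sum_divide_distrib[symmetric] sum_R4_uv[OF acs] ..

lemma Rbar_mI: "Rbar R mI = (\<lambda>i j. - (\<Sum>k\<in>UNIV. R i k k j))"
  unfolding Rbar_def mI_def by (auto simp: mult_if0 sum.delta sum_negf intro!: ext)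

lemma qf_Hv:
  fixes R :: "('n::finite) tensor4"
  assumes acs: "alg_curv_tensor R"
  shows "qf R (Hv v) = 2 * real (card (UNIV::'n set)) * ricci_form R v - scal R"
proof -
  let ?n = "real (card (UNIV::'n set))"
  have "qf R (Hv v) = qf R (mI::'n tensor2) + 2 * ?n * inner2 (Rbar R mI) (sym2 v v) + ?n\<^sup>2 * qf R (sym2 v v)"
    unfolding Hv_def by (rule qf_expand[OF acs])
  also have "qf R (sym2 v v) = 0" unfolding qf_sym2[OF acs] R4_zero12[OF acs] by simp
  also have "qf R (mI::'n tensor2) = - scal R"
  proof -
    have "qf R (mI::'n tensor2) = - trace2 (Rbar R mI)" unfolding qf_def by (rule inner2_mI_right)
    also have "\<dots> = (\<Sum>i\<in>UNIV. \<Sum>k\<in>(UNIV::'n set). R i k k i)" unfolding Rbar_mI trace2_def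
      by (simp add: sum_negf)
    also have "\<dots> = (\<Sum>i\<in>UNIV. \<Sum>k\<in>(UNIV::'n set). - R i k i k)"
    proof -
      have "\<And>i k. R i k k i = - R i k i k" by (rule acs_facts(2)[OF acs])
      then show ?thesis by simp
    qed
    finally show ?thesis unfolding scal_def by (simp add: sum_negf)
  qed
  also have "inner2 (Rbar R mI) (sym2 v v) = ricci_form R v"
  proof -
    have "inner2 (Rbar R mI) (sym2 v v) = bil (Rbar R mI) v v" unfolding inner2_sym2_right by simp
    also have "\<dots> = (\<Sum>i\<in>UNIV. \<Sum>j\<in>UNIV. (\<Sum>k\<in>UNIV. R k i k j) * v i * v j)"
    proof -
      have "\<And>i k j. R i k k j = - R k i k j" by (rule acs_facts(1)[OF acs])
      then show ?thesis unfolding bil_def Rbar_mI by (simp add: sum_negf)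
    qed
    also have "\<dots> = ricci_form R v" unfolding ricci_form_def ricci_def by simp
    finally show ?thesis .
  qed
  finally show ?thesis by simp
qed


lemma inner2_3:
  "inner2 (\<lambda>i j. (a i j + s * b i j) + t * c i j) (\<lambda>i j. (a i j + s * b i j) + t * c i j)
   = inner2 a a + s\<^sup>2 * inner2 b b + t\<^sup>2 * inner2 c c + 2 * s * inner2 a b + 2 * t * inner2 a c
     + 2 * s * t * inner2 b c"
proof -
  have "inner2 (\<lambda>i j. (a i j + s * b i j) + t * c i j) (\<lambda>i j. (a i j + s * b i j) + t * c i j)
     = inner2 (\<lambda>i j. a i j + s * b i j) (\<lambda>i j. a i j + s * b i j)
       + 2 * t * inner2 (\<lambda>i j. a i j + s * b i j) c + t\<^sup>2 * inner2 c c"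
    using inner2_expand[of "\<lambda>i j. a i j + s * b i j" t c] by simp
  also have "inner2 (\<lambda>i j. a i j + s * b i j) (\<lambda>i j. a i j + s * b i j)
     = inner2 a a + 2 * s * inner2 a b + s\<^sup>2 * inner2 b b" by (rule inner2_expand)
  also have "inner2 (\<lambda>i j. a i j + s * b i j) c = inner2 a c + s * inner2 b c"
    by (rule inner2_axpy_left)
  finally show ?thesis by (simp add: algebra_simps)
qed

lemma c4:
  fixes h :: "('n::finite) tensor2" and v :: "'n \<Rightarrow> real"
  assumes Sh: "traceless_sym h" and vv: "dot v v = 1" and n2: "2 \<le> card (UNIV::'n set)"
  shows "real (card (UNIV::'n set)) * (bil h v v)\<^sup>2 / (real (card (UNIV::'n set)) - 1)
     + 2 * (\<Sum>i\<in>UNIV. (inner2 h (Xv v i))\<^sup>2) \<le> inner2 h h"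
proof -
  let ?n = "real (card (UNIV::'n set))"
  have n1: "?n - 1 > 0" using n2 by simp
  have s: "\<forall>i j. h i j = h j i" using Sh unfolding traceless_sym_def by auto
  define a0 where "a0 = bil h v v"
  define w where "w i = (\<Sum>l\<in>UNIV. h i l * v l)" for i
  define p where "p i = w i - v i * a0" for i
  have hX: "inner2 h (Xv v i) = p i" for i unfolding p_def w_def a0_def by (rule inner2_h_Xv[OF s])
  have pw: "bil h p v = dot p w" unfolding bil_def dot_def w_def by (simp add: sum_distrib_left mult_ac)
  have vw: "dot v w = a0" unfolding a0_def bil_def dot_def w_def by (simp add: sum_distrib_left mult_ac)
  have vp: "dot v p = 0"
  proof -
    have "dot v p = (\<Sum>i\<in>UNIV. v i * w i - a0 * (v i * v i))" unfolding dot_def p_def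
      by (intro sum.cong refl) (simp add: algebra_simps)
    also have "\<dots> = dot v w - a0 * dot v v" unfolding dot_def
      by (simp only: sum_subtractf sum_distrib_left)
    finally have "dot v p = dot v w - a0 * dot v v" .
    then show ?thesis using vw vv by simp
  qed
  have pwp: "dot p w = dot p p"
  proof -
    have "dot p p = (\<Sum>i\<in>UNIV. p i * w i - a0 * (p i * v i))" unfolding dot_def
      by (intro sum.cong refl) (simp add: p_def algebra_simps)
    also have "\<dots> = dot p w - a0 * dot p v" unfolding dot_def
      by (simp only: sum_subtractf sum_distrib_left)
    finally have "dot p p = dot p w - a0 * dot p v" .
    then show ?thesis using vp dot_sym[of v p] by simp
  qed
  have e1: "inner2 h (sym2 v p) = dot p p"
    unfolding inner2_sym2_right_sym[OF s] bil_sym[OF s, of v p] pw pwp ..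
  have e2: "inner2 (sym2 v p) (sym2 v p) = dot p p / 2"
    unfolding inner2_sym2_sym2 vv vp by simp
  have e3: "inner2 h (Hv v) = ?n * a0" unfolding a0_def by (rule inner2_h_Hv[OF Sh])
  have e4: "inner2 (sym2 v p) (Hv v) = 0"
    unfolding Hv_def inner2_axpy_right inner2_mI_right trace2_sym2 inner2_sym2_sym2 vv vp
    by (simp add: dot_sym[of p v] vp)
  have e5: "inner2 (Hv v) (Hv v) = ?n * (?n - 1)" by (rule inner2_Hv_self[OF vv])
  define c where "c = a0 / (?n - 1)"
  have "0 \<le> inner2 (\<lambda>i j. (h i j + (-2) * sym2 v p i j) + (- c) * Hv v i j)
                    (\<lambda>i j. (h i j + (-2) * sym2 v p i j) + (- c) * Hv v i j)"
    by (rule inner2_self_nonneg)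
  also have "\<dots> = inner2 h h + 4 * (dot p p / 2) + c\<^sup>2 * (?n * (?n - 1)) + 2 * (-2) * dot p p
       + 2 * (- c) * (?n * a0) + 2 * (-2) * (- c) * 0"
    unfolding inner2_3 e1 e2 e3 e4 e5 by (simp add: power2_eq_square)
  also have "\<dots> = inner2 h h - 2 * dot p p - ?n * a0 * c"
  proof -
    have cc: "c * (?n - 1) = a0" unfolding c_def using n1 by simp
    have "c\<^sup>2 * (?n * (?n - 1)) = ?n * c * (c * (?n - 1))" by (simp add: power2_eq_square mult_ac)
    then have "c\<^sup>2 * (?n * (?n - 1)) = ?n * c * a0" using cc by simp
    then show ?thesis by (simp add: algebra_simps)
  qed
  also have "?n * a0 * c = ?n * a0\<^sup>2 / (?n - 1)" unfolding c_def by (simp add: power2_eq_square)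
  finally have "?n * a0\<^sup>2 / (?n - 1) + 2 * dot p p \<le> inner2 h h" by simp
  moreover have "(\<Sum>i\<in>UNIV. (inner2 h (Xv v i))\<^sup>2) = dot p p"
    unfolding hX dot_def by (simp add: power2_eq_square)
  ultimately show ?thesis unfolding a0_def by simp
qed

lemma sum_swap5:
  "(\<Sum>a\<in>A. \<Sum>i\<in>B. \<Sum>j\<in>C. \<Sum>k\<in>D. \<Sum>l\<in>E. F a i j k l)
   = (\<Sum>i\<in>B. \<Sum>j\<in>C. \<Sum>k\<in>D. \<Sum>l\<in>E. \<Sum>a\<in>A. F a i j k l)"
proof -
  have "(\<Sum>a\<in>A. \<Sum>i\<in>B. \<Sum>j\<in>C. \<Sum>k\<in>D. \<Sum>l\<in>E. F a i j k l)
     = (\<Sum>i\<in>B. \<Sum>a\<in>A. \<Sum>j\<in>C. \<Sum>k\<in>D. \<Sum>l\<in>E. F a i j k l)" by (rule sum.swap)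
  also have "\<dots> = (\<Sum>i\<in>B. \<Sum>j\<in>C. \<Sum>a\<in>A. \<Sum>k\<in>D. \<Sum>l\<in>E. F a i j k l)"
    by (intro sum.cong refl sum.swap)
  also have "\<dots> = (\<Sum>i\<in>B. \<Sum>j\<in>C. \<Sum>k\<in>D. \<Sum>l\<in>E. \<Sum>a\<in>A. F a i j k l)"
    by (intro sum.cong refl sum_swap3)
  finally show ?thesis .
qed

locale eigdata =
  fixes R :: "('n::finite) tensor4" and e :: "nat \<Rightarrow> 'n tensor2" and lam :: "nat \<Rightarrow> real"
  assumes acs: "alg_curv_tensor R"
    and on: "orthonormal_fam e (dimS20 (card (UNIV::'n set)))"
    and Se: "\<forall>a<dimS20 (card (UNIV::'n set)). traceless_sym (e a)"
    and eig: "\<forall>a<dimS20 (card (UNIV::'n set)). curv_op2 R (e a) = (\<lambda>i j. lam a * e a i j)"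
begin


lemma expand1:
  assumes "traceless_sym X"
  shows "(\<Sum>a<dimS20 (card (UNIV::'n set)). (inner2 (e a) X)\<^sup>2) = inner2 X X"
proof -
  have "inner2 X X = (\<Sum>a<dimS20 (card (UNIV::'n set)). inner2 X (e a) * inner2 (e a) X)"
    by (rule parseval[OF on Se assms])
  also have "\<dots> = (\<Sum>a<dimS20 (card (UNIV::'n set)). (inner2 (e a) X)\<^sup>2)"
    by (intro sum.cong refl) (metis inner2_sym power2_eq_square)
  finally show ?thesis ..
qed

lemma expand2:
  assumes SX: "traceless_sym X"
  shows "(\<Sum>a<dimS20 (card (UNIV::'n set)). lam a * (inner2 (e a) X)\<^sup>2) = qf R X"
proof -
  have SA: "traceless_sym (curv_op2 R X)" by (rule curv_op2_S[OF acs SX])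
  have "qf R X = inner2 (curv_op2 R X) X" unfolding qf_def by (rule curv_op2_inner[OF SX, symmetric])
  also have "\<dots> = (\<Sum>a<dimS20 (card (UNIV::'n set)). inner2 (curv_op2 R X) (e a) * inner2 (e a) X)"
    by (rule parseval[OF on Se SA])
  also have "\<dots> = (\<Sum>a<dimS20 (card (UNIV::'n set)). lam a * (inner2 (e a) X)\<^sup>2)"
  proof (intro sum.cong refl)
    fix a assume "a \<in> {..<dimS20 (card (UNIV::'n set))}"
    then have a: "a < dimS20 (card (UNIV::'n set))" by simp
    have "inner2 (curv_op2 R X) (e a) = inner2 (Rbar R X) (e a)"
      using Se a by (simp add: curv_op2_inner)
    also have "\<dots> = inner2 X (Rbar R (e a))" by (rule Rbar_selfadj[OF acs])
    also have "\<dots> = inner2 (Rbar R (e a)) X" by (rule inner2_sym)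
    also have "\<dots> = inner2 (curv_op2 R (e a)) X" by (rule curv_op2_inner[OF SX, symmetric])
    also have "\<dots> = lam a * inner2 (e a) X" using eig a by (simp add: inner2_scale_left)
    finally show "inner2 (curv_op2 R X) (e a) * inner2 (e a) X = lam a * (inner2 (e a) X)\<^sup>2"
      by (simp add: power2_eq_square)
  qed
  finally show ?thesis ..
qed

lemma lam_qf: "a < dimS20 (card (UNIV::'n set)) \<Longrightarrow> lam a = qf R (e a)"
proof -
  assume a: "a < dimS20 (card (UNIV::'n set))"
  have "qf R (e a) = inner2 (curv_op2 R (e a)) (e a)"
    unfolding qf_def using Se a by (simp add: curv_op2_inner)
  also have "\<dots> = lam a * inner2 (e a) (e a)" using eig a by (simp add: inner2_scale_left)
  also have "\<dots> = lam a" using on a unfolding orthonormal_fam_def by simp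
  finally show ?thesis by simp
qed

lemma lam_trace: "(\<Sum>a<dimS20 (card (UNIV::'n set)). lam a) = (1/2 + 1 / real (card (UNIV::'n set))) * scal R"
proof -
  have "(\<Sum>a<dimS20 (card (UNIV::'n set)). lam a) = (\<Sum>a<dimS20 (card (UNIV::'n set)). \<Sum>i\<in>UNIV. \<Sum>j\<in>UNIV. \<Sum>k\<in>UNIV. \<Sum>l\<in>UNIV. R i k l j * e a k l * e a i j)"
  proof (intro sum.cong refl)
    fix a assume "a \<in> {..<dimS20 (card (UNIV::'n set))}"
    then show "lam a = (\<Sum>i\<in>UNIV. \<Sum>j\<in>UNIV. \<Sum>k\<in>UNIV. \<Sum>l\<in>UNIV. R i k l j * e a k l * e a i j)"
      using lam_qf unfolding qf_def inner2_def Rbar_def by (simp add: sum_distrib_right)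
  qed
  also have "\<dots> = (\<Sum>i\<in>UNIV. \<Sum>j\<in>UNIV. \<Sum>k\<in>UNIV. \<Sum>l\<in>UNIV. \<Sum>a<dimS20 (card (UNIV::'n set)). R i k l j * e a k l * e a i j)"
    by (rule sum_swap5)
  also have "\<dots> = (\<Sum>i\<in>UNIV. \<Sum>j\<in>UNIV. \<Sum>k\<in>UNIV. \<Sum>l\<in>UNIV. R i k l j * symP (Ebas k l) i j)"
  proof (intro sum.cong refl)
    fix i j k l
    have "(\<Sum>a<dimS20 (card (UNIV::'n set)). R i k l j * e a k l * e a i j) = R i k l j * (\<Sum>a<dimS20 (card (UNIV::'n set)). e a k l * e a i j)"
      by (simp add: sum_distrib_left mult_ac)
    also have "\<dots> = R i k l j * symP (Ebas k l) i j" using resolution[OF on Se] by simp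
    finally show "(\<Sum>a<dimS20 (card (UNIV::'n set)). R i k l j * e a k l * e a i j) = R i k l j * symP (Ebas k l) i j" .
  qed
  also have "\<dots> = (1/2 + 1 / real (card (UNIV::'n set))) * scal R" by (rule sum_R_symP[OF acs])
  finally show ?thesis .
qed

end

lemma rearr:
  fixes L :: "real list" and c :: "nat \<Rightarrow> real" and \<alpha> :: real
  assumes srt: "sorted L" and len: "length L = N"
    and c01: "\<forall>a<N. 0 \<le> c a \<and> c a \<le> 1" and csum: "(\<Sum>a<N. c a) = \<alpha>"
    and a0: "0 \<le> \<alpha>" and aN: "\<alpha> < real N"
  shows "partial_eig_sum L \<alpha> \<le> (\<Sum>a<N. L ! a * c a)"
proof -
  define m where "m = nat \<lfloor>\<alpha>\<rfloor>"
  define f where "f = \<alpha> - of_int \<lfloor>\<alpha>\<rfloor>"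
  have mr: "real m = of_int \<lfloor>\<alpha>\<rfloor>" unfolding m_def using a0 by simp
  have f01: "0 \<le> f" "f < 1" unfolding f_def by linarith+
  have mN: "m < N"
  proof -
    have "real m \<le> \<alpha>" using mr by linarith
    then show ?thesis using aN by simp
  qed
  define d where "d a = (if a < m then 1 else if a = m then f else 0)" for a
  have dsum: "(\<Sum>a<N. L ! a * d a) = partial_eig_sum L \<alpha>"
  proof -
    have "(\<Sum>a<N. L ! a * d a) = (\<Sum>a<N. (if a \<in> {..<m} then L ! a else 0) + (if a = m then f * L ! a else 0))"
      unfolding d_def by (intro sum.cong refl) auto
    also have "\<dots> = (\<Sum>a<N. if a < m then L ! a else 0) + f * L ! m"
      using mN by (simp add: sum.distrib sum.delta)
    also have "(\<Sum>a<N. if a < m then L ! a else 0) = (\<Sum>a<m. L ! a)"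
    proof -
      have "{x\<in>{..<N}. x < m} = {..<m}" using mN by auto
      moreover have "sum (\<lambda>a. L ! a) {x\<in>{..<N}. x < m} = (\<Sum>a<N. if a < m then L ! a else 0)"
        by (rule sum.inter_filter) simp
      ultimately show ?thesis by simp
    qed
    finally show ?thesis unfolding partial_eig_sum_def m_def f_def by simp
  qed
  have dtot: "(\<Sum>a<N. d a) = \<alpha>"
  proof -
    have "(\<Sum>a<N. d a) = (\<Sum>a<N. (if a \<in> {..<m} then 1 else 0) + (if a = m then f else 0))"
      unfolding d_def by (intro sum.cong refl) auto
    also have "\<dots> = (\<Sum>a<N. if a < m then 1 else 0) + f"
      using mN by (simp add: sum.distrib sum.delta)
    also have "(\<Sum>a<N. if a < m then 1 else 0) = (\<Sum>a<m. (1::real))"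
    proof -
      have "{x\<in>{..<N}. x < m} = {..<m}" using mN by auto
      moreover have "sum (\<lambda>a. (1::real)) {x\<in>{..<N}. x < m} = (\<Sum>a<N. if a < m then 1 else 0)"
        by (rule sum.inter_filter) simp
      ultimately show ?thesis by simp
    qed
    finally show ?thesis using mr unfolding f_def by simp
  qed
  have pos: "0 \<le> (L ! a - L ! m) * (c a - d a)" if a: "a < N" for a
  proof (cases "a < m")
    case True
    then have "L ! a \<le> L ! m" using srt len mN by (simp add: sorted_nth_mono)
    moreover have "c a - d a \<le> 0" using c01 a True unfolding d_def by auto
    ultimately show ?thesis by (simp add: mult_nonpos_nonpos)
  next
    case False
    show ?thesis
    proof (cases "a = m")
      case True then show ?thesis by simp
    next
      case False
      then have "m \<le> a" using \<open>\<not> a < m\<close> by simp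
      then have "L ! m \<le> L ! a" using srt len a by (simp add: sorted_nth_mono)
      moreover have "0 \<le> c a - d a" using c01 a False \<open>\<not> a < m\<close> unfolding d_def by auto
      ultimately show ?thesis by simp
    qed
  qed
  have "(\<Sum>a<N. L ! a * c a) - (\<Sum>a<N. L ! a * d a)
      = (\<Sum>a<N. (L ! a - L ! m) * (c a - d a)) + L ! m * ((\<Sum>a<N. c a) - (\<Sum>a<N. d a))"
    by (simp add: algebra_simps sum.distrib sum_subtractf sum_distrib_left)
  also have "(\<Sum>a<N. c a) - (\<Sum>a<N. d a) = 0" using csum dtot by simp
  finally have "(\<Sum>a<N. L ! a * c a) - (\<Sum>a<N. L ! a * d a) = (\<Sum>a<N. (L ! a - L ! m) * (c a - d a))"
    by simp
  also have "\<dots> \<ge> 0" using pos by (intro sum_nonneg) auto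
  finally show ?thesis using dsum by simp
qed


lemma l1: "3 \<le> (n::real) \<Longrightarrow> (2 * n * ric - S) / (n * (n - 1)) + ((\<alpha> - 1) / (n - 1)) * ric + S / (n * (n - 1)) = ric * ((\<alpha> + 1) / (n - 1))"
proof -
  assume n3: "3 \<le> n"
  have nz: "n \<noteq> 0" "n - 1 \<noteq> 0" using n3 by auto
  have "(2 * n * ric - S) / (n * (n - 1)) + S / (n * (n - 1)) = (n * (2 * ric)) / (n * (n - 1))"
    by (simp add: add_divide_distrib[symmetric] algebra_simps)
  also have "\<dots> = 2 * ric / (n - 1)" by (rule mult_divide_mult_cancel_left[OF nz(1)])
  finally have e: "(2 * n * ric - S) / (n * (n - 1)) + S / (n * (n - 1)) = 2 * ric / (n - 1)" .
  have "2 * ric / (n - 1) + ((\<alpha> - 1) / (n - 1)) * ric = (2 * ric + (\<alpha> - 1) * ric) / (n - 1)"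
    by (simp add: add_divide_distrib)
  also have "\<dots> = (ric * (\<alpha> + 1)) / (n - 1)"
    by (rule arg_cong[where f="\<lambda>x. x / (n - 1)"]) (simp add: algebra_simps)
  finally have "2 * ric / (n - 1) + ((\<alpha> - 1) / (n - 1)) * ric = ric * ((\<alpha> + 1) / (n - 1))" by simp
  then show ?thesis using e by simp
qed
lemma l2: "3 \<le> (n::real) \<Longrightarrow> (1/2 + 1/n) / ((n - 1) * (n + 2) / 2) = 1 / (n * (n - 1))"
proof -
  assume n3: "3 \<le> n"
  have nz: "n \<noteq> 0" "n - 1 \<noteq> 0" "n + 2 \<noteq> 0" using n3 by auto
  have "1/2 + 1/n = (n + 2) / (2 * n)" using nz by (simp add: field_simps)
  then have "(1/2 + 1/n) / ((n - 1) * (n + 2) / 2) = ((n + 2) / (2 * n)) / ((n - 1) * (n + 2) / 2)" by simp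
  also have "\<dots> = ((n + 2) * 2) / ((n + 2) * (2 * n * (n - 1)))" by (simp add: field_simps)
  also have "\<dots> = 2 / (2 * n * (n - 1))" by (rule mult_divide_mult_cancel_left[OF nz(3)])
  also have "\<dots> = 1 / (n * (n - 1))" by simp
  finally show ?thesis .
qed


lemma alg_case1:
  fixes n \<alpha> S ric P :: real
  assumes n3: "3 \<le> n" and a1: "1 \<le> \<alpha>" and an: "\<alpha> \<le> n"
    and up: "P \<le> (2 * n * ric - S) / (n * (n - 1)) + ((\<alpha> - 1) / (n - 1)) * ric"
    and lo: "- (1 * (S / (n * (n - 1)))) \<le> P"
  shows "0 \<le> ric"
proof -
  have "0 \<le> (2 * n * ric - S) / (n * (n - 1)) + ((\<alpha> - 1) / (n - 1)) * ric + S / (n * (n - 1))"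
    using up lo by simp
  also have "\<dots> = ric * ((\<alpha> + 1) / (n - 1))" by (rule l1[OF n3])
  finally have "0 \<le> ric * ((\<alpha> + 1) / (n - 1))" .
  moreover have q: "0 < (\<alpha> + 1) / (n - 1)" using n3 a1 by simp
  ultimately show ?thesis
  proof -
    assume h: "0 \<le> ric * ((\<alpha> + 1) / (n - 1))"
    show ?thesis
    proof (rule ccontr)
      assume "\<not> 0 \<le> ric"
      then have "ric * ((\<alpha> + 1) / (n - 1)) < 0" using q by (intro mult_neg_pos) auto
      then show False using h by simp
    qed
  qed
qed

lemma alg_case1_strict:
  fixes n \<alpha> S ric P :: real
  assumes n3: "3 \<le> n" and a1: "1 \<le> \<alpha>" and an: "\<alpha> \<le> n"
    and up: "P \<le> (2 * n * ric - S) / (n * (n - 1)) + ((\<alpha> - 1) / (n - 1)) * ric"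
    and lo: "- (1 * (S / (n * (n - 1)))) < P"
  shows "0 < ric"
proof -
  have "0 < (2 * n * ric - S) / (n * (n - 1)) + ((\<alpha> - 1) / (n - 1)) * ric + S / (n * (n - 1))"
    using up lo by simp
  also have "\<dots> = ric * ((\<alpha> + 1) / (n - 1))" by (rule l1[OF n3])
  finally have "0 < ric * ((\<alpha> + 1) / (n - 1))" .
  moreover have q: "0 < (\<alpha> + 1) / (n - 1)" using n3 a1 by simp
  ultimately show ?thesis
  proof -
    assume h: "0 < ric * ((\<alpha> + 1) / (n - 1))"
    show ?thesis
    proof (rule ccontr)
      assume "\<not> 0 < ric"
      then have "ric * ((\<alpha> + 1) / (n - 1)) \<le> 0" using q by (intro mult_nonpos_nonneg) auto
      then show False using h by simp
    qed
  qed
qed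

lemma alg_ident2:
  fixes n \<alpha> Nr t K Ta :: real
  assumes n3: "3 \<le> n" and Nr: "Nr = (n - 1) * (n + 2) / 2" and t: "t = (\<alpha> - n) / (Nr - n)"
    and K: "K = 1 / (n * (n - 1))" and Ta: "Ta = 1 + n * (n - \<alpha>) / (n - 2)"
  shows "t * (1/2 + 1/n) - (1 - t) * K + Ta * K = 0"
proof -
  have nz: "n \<noteq> 0" "n - 1 \<noteq> 0" "n - 2 \<noteq> 0" using n3 by auto
  have d: "Nr - n = (n - 2) * (n + 1) / 2" unfolding Nr by (simp add: field_simps)
  have dnz: "Nr - n \<noteq> 0" unfolding d using n3 by simp
  have tt: "t * ((n - 2) * (n + 1)) = 2 * (\<alpha> - n)"
  proof -
    have "t * (Nr - n) = \<alpha> - n" unfolding t using dnz by simp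
    then have e: "t * ((n - 2) * (n + 1) / 2) = \<alpha> - n" unfolding d .
    have "t * ((n - 2) * (n + 1)) = 2 * (t * ((n - 2) * (n + 1) / 2))" by simp
    then show ?thesis using e by simp
  qed
  have f1: "(1/2 + 1/n) * (2 * n) = n + 2" using nz by (simp add: algebra_simps)
  have f2: "K * (n * (n - 1)) = 1" unfolding K using nz by simp
  have f3: "Ta * (n - 2) = (n - 2) + n * (n - \<alpha>)"
  proof -
    have "n * (n - \<alpha>) / (n - 2) * (n - 2) = n * (n - \<alpha>)" using nz(3) by simp
    then show ?thesis unfolding Ta by (simp add: distrib_right)
  qed
  have "(t * (1/2 + 1/n) - (1 - t) * K + Ta * K) * (2 * n * (n - 1) * (n - 2))
      = t * ((1/2 + 1/n) * (2 * n)) * ((n - 1) * (n - 2)) - 2 * (1 - t) * (n - 2) * (K * (n * (n - 1)))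
        + 2 * (Ta * (n - 2)) * (K * (n * (n - 1)))"
    by (simp add: algebra_simps)
  also have "\<dots> = t * (n + 2) * ((n - 1) * (n - 2)) - 2 * (1 - t) * (n - 2) + 2 * ((n - 2) + n * (n - \<alpha>))"
    unfolding f1 f2 f3 by simp
  also have "\<dots> = n * (t * ((n - 2) * (n + 1)) - 2 * (\<alpha> - n))"
    by (simp add: algebra_simps)
  also have "\<dots> = 0" unfolding tt by simp
  finally have "(t * (1/2 + 1/n) - (1 - t) * K + Ta * K) * (2 * n * (n - 1) * (n - 2)) = 0" .
  moreover have "2 * n * (n - 1) * (n - 2) \<noteq> 0" using nz by simp
  ultimately show ?thesis by simp
qed

lemma alg_case2:
  fixes n \<alpha> Nr t S ric P K Ta :: real
  assumes n3: "3 \<le> n" and Nr: "Nr = (n - 1) * (n + 2) / 2" and na: "n < \<alpha>" and aN: "\<alpha> < Nr"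
    and t: "t = (\<alpha> - n) / (Nr - n)"
    and K: "K = 1 / (n * (n - 1))" and Ta: "Ta = 1 + n * (n - \<alpha>) / (n - 2)"
    and up: "P \<le> t * ((1/2 + 1/n) * S) + (1 - t) * ((2 * n * ric - S) / (n * (n - 1))) + (1 - t) * ric"
  shows "- Ta * S / (n * (n - 1)) \<le> P \<Longrightarrow> 0 \<le> ric"
    and "- Ta * S / (n * (n - 1)) < P \<Longrightarrow> 0 < ric"
proof -
  have i: "t * (1/2 + 1/n) - (1 - t) * K + Ta * K = 0" by (rule alg_ident2[OF n3 Nr t K Ta])
  have Kp: "0 < K" unfolding K using n3 by simp
  have t1: "t < 1"
  proof -
    have "0 < Nr - n" using na aN by simp
    then show ?thesis unfolding t using aN by simp
  qed
  have "0 \<le> 2 * n * K" using Kp n3 by (intro mult_nonneg_nonneg) auto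
  then have c: "0 < (1 - t) * (2 * n * K + 1)" using t1 by (intro mult_pos_pos) linarith+
  have conv: "\<And>x. x / (n * (n - 1)) = x * K" unfolding K by simp
  have "t * ((1/2 + 1/n) * S) + (1 - t) * ((2 * n * ric - S) / (n * (n - 1))) + (1 - t) * ric
        - (- Ta * S / (n * (n - 1)))
      = (1 - t) * (2 * n * K + 1) * ric + S * (t * (1/2 + 1/n) - (1 - t) * K + Ta * K)"
    unfolding conv by (simp add: algebra_simps)
  also have "\<dots> = (1 - t) * (2 * n * K + 1) * ric" unfolding i by simp
  finally have key: "t * ((1/2 + 1/n) * S) + (1 - t) * ((2 * n * ric - S) / (n * (n - 1))) + (1 - t) * ric
        - (- Ta * S / (n * (n - 1))) = (1 - t) * (2 * n * K + 1) * ric" .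
  show "- Ta * S / (n * (n - 1)) \<le> P \<Longrightarrow> 0 \<le> ric"
  proof -
    assume lo: "- Ta * S / (n * (n - 1)) \<le> P"
    have "0 \<le> (1 - t) * (2 * n * K + 1) * ric" using key up lo by linarith
    then show ?thesis using c by (simp add: zero_le_mult_iff)
  qed
  show "- Ta * S / (n * (n - 1)) < P \<Longrightarrow> 0 < ric"
  proof -
    assume lo: "- Ta * S / (n * (n - 1)) < P"
    have "0 < (1 - t) * (2 * n * K + 1) * ric" using key up lo by linarith
    then show ?thesis using c by (simp add: zero_less_mult_iff)
  qed
qed

lemma ricci_form_scale: "ricci_form R (\<lambda>i. c * v i) = c\<^sup>2 * ricci_form R v"
  unfolding ricci_form_def by (simp add: sum_distrib_left power2_eq_square mult_ac)

lemma unit_case: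
  fixes R :: "('n::finite) tensor4" and v :: "'n \<Rightarrow> real" and \<alpha> :: real
  assumes n3: "3 \<le> card (UNIV :: 'n set)" and acs: "alg_curv_tensor R"
    and a1: "1 \<le> \<alpha>" and aN: "\<alpha> < real (dimS20 (card (UNIV :: 'n set)))"
    and vv: "dot v v = 1" and ELx: "is_eigenvalue_list R (curv_op2_eigenvalues R)"
  shows "(in_cone R \<alpha> (Theta_bar (card (UNIV :: 'n set)) \<alpha>) \<longrightarrow> 0 \<le> ricci_form R v) \<and>
         (in_cone_interior R \<alpha> (Theta_bar (card (UNIV :: 'n set)) \<alpha>) \<longrightarrow> 0 < ricci_form R v)"
proof -
  let ?N = "dimS20 (card (UNIV :: 'n set))"
  define n where "n = real (card (UNIV :: 'n set))"
  define Nr where "Nr = real ?N"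
  have n3r: "3 \<le> n" unfolding n_def using n3 by simp
  have Nr: "Nr = (n - 1) * (n + 2) / 2" unfolding Nr_def n_def
    by (rule real_dimS20) (use n3 in simp)
  define L where "L = curv_op2_eigenvalues R"
  have EL: "is_eigenvalue_list R L" unfolding L_def by (rule ELx)
  then obtain e where len: "length L = ?N" and srt: "sorted L"
    and Se: "\<forall>a<?N. traceless_sym (e a)"
    and onx: "\<forall>a<?N. \<forall>b<?N. inner2 (e a) (e b) = (if a = b then 1 else 0)"
    and eig: "\<forall>a<?N. curv_op2 R (e a) = (\<lambda>i j. L ! a * e a i j)"
    unfolding is_eigenvalue_list_def by blast
  have on: "orthonormal_fam e ?N" unfolding orthonormal_fam_def using onx by blast
  interpret E: eigdata R e "\<lambda>a. L ! a"
    by unfold_locales (use acs on Se eig in auto)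
  define S where "S = scal R"
  define ric where "ric = ricci_form R v"
  define t where "t = (if \<alpha> \<le> n then 0 else (\<alpha> - n) / (Nr - n))"
  define wM where "wM = (if \<alpha> \<le> n then (\<alpha> - 1) / (n - 1) else 1)"
  have Nrn: "n < Nr \<Longrightarrow> 0 < Nr - n" by simp
  have t0: "0 \<le> t" and twM: "t \<le> wM" and wM1: "wM \<le> 1"
  proof -
    show "0 \<le> t" unfolding t_def using aN by (auto simp: Nr_def)
    show "t \<le> wM"
    proof (cases "\<alpha> \<le> n")
      case True then show ?thesis unfolding t_def wM_def using a1 n3r by simp
    next
      case False
      then have "0 < Nr - n" using aN unfolding Nr_def by simp
      then show ?thesis unfolding t_def wM_def using False aN by (simp add: Nr_def)
    qed
    show "wM \<le> 1" unfolding wM_def using n3r by simp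
  qed
  have nz: "n \<noteq> 0" "n - 1 \<noteq> 0" using n3r by auto
  have nn1: "0 < n * (n - 1)" using n3r by simp
  define x where "x a = (inner2 (e a) (Hv v))\<^sup>2 / (n * (n - 1))" for a
  define y where "y a = 2 * (\<Sum>i\<in>UNIV. (inner2 (e a) (Xv v i))\<^sup>2)" for a
  define c where "c a = t + (1 - t) * x a + (wM - t) * y a" for a
  have c01: "\<forall>a<?N. 0 \<le> c a \<and> c a \<le> 1"
  proof (intro allI impI)
    fix a assume a: "a < ?N"
    have Sa: "traceless_sym (e a)" using Se a by simp
    have x0: "0 \<le> x a" unfolding x_def using nn1 by simp
    have y0: "0 \<le> y a" unfolding y_def by (simp add: sum_nonneg)
    have xa: "x a = n * (bil (e a) v v)\<^sup>2 / (n - 1)"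
    proof -
      have "x a = (n * (n * (bil (e a) v v)\<^sup>2)) / (n * (n - 1))"
        unfolding x_def inner2_h_Hv[OF Sa] n_def by (simp add: power2_eq_square mult_ac)
      also have "\<dots> = n * (bil (e a) v v)\<^sup>2 / (n - 1)"
        by (rule mult_divide_mult_cancel_left[OF nz(1)])
      finally show ?thesis .
    qed
    have xy: "x a + y a \<le> 1"
      using c4[OF Sa vv] n3 on a unfolding xa y_def n_def orthonormal_fam_def by simp
    show "0 \<le> c a \<and> c a \<le> 1"
    proof
      show "0 \<le> c a" unfolding c_def using t0 twM wM1 x0 y0 by (simp add: add_nonneg_nonneg)
      have "(wM - t) * y a \<le> (1 - t) * y a" using wM1 y0 by (intro mult_right_mono) auto
      moreover have "(1 - t) * (x a + y a) \<le> (1 - t) * 1" using xy twM wM1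
        by (intro mult_left_mono) auto
      ultimately show "c a \<le> 1" unfolding c_def by (simp add: algebra_simps)
    qed
  qed
  have sx: "(\<Sum>a<?N. x a) = 1"
  proof -
    have "(\<Sum>a<?N. x a) = (\<Sum>a<?N. (inner2 (e a) (Hv v))\<^sup>2) / (n * (n - 1))"
      unfolding x_def by (simp add: sum_divide_distrib)
    also have "\<dots> = inner2 (Hv v) (Hv v) / (n * (n - 1))" using E.expand1[OF Hv_S[OF vv]] by simp
    also have "\<dots> = 1" unfolding inner2_Hv_self[OF vv] n_def[symmetric] using n3r by simp
    finally show ?thesis .
  qed
  have sy: "(\<Sum>a<?N. y a) = n - 1"
  proof -
    have "(\<Sum>a<?N. y a) = 2 * (\<Sum>a<?N. \<Sum>i\<in>UNIV. (inner2 (e a) (Xv v i))\<^sup>2)"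
      unfolding y_def by (simp only: sum_distrib_left)
    also have "\<dots> = 2 * (\<Sum>i\<in>UNIV. \<Sum>a<?N. (inner2 (e a) (Xv v i))\<^sup>2)"
      by (subst sum.swap) (rule refl)
    also have "\<dots> = 2 * (\<Sum>i\<in>UNIV. inner2 (Xv v i) (Xv v i))"
      using E.expand1[OF Xv_S[OF vv]] by simp
    also have "\<dots> = n - 1" unfolding sum_Xv_self[OF vv] n_def by simp
    finally show ?thesis .
  qed
  have slx: "(\<Sum>a<?N. L ! a * x a) = (2 * n * ric - S) / (n * (n - 1))"
  proof -
    have "(\<Sum>a<?N. L ! a * x a) = (\<Sum>a<?N. L ! a * (inner2 (e a) (Hv v))\<^sup>2) / (n * (n - 1))"
      unfolding x_def by (simp add: sum_divide_distrib)
    also have "\<dots> = qf R (Hv v) / (n * (n - 1))" using E.expand2[OF Hv_S[OF vv]] by simp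
    finally show ?thesis unfolding qf_Hv[OF acs] n_def ric_def S_def .
  qed
  have sly: "(\<Sum>a<?N. L ! a * y a) = ric"
  proof -
    have "(\<Sum>a<?N. L ! a * y a) = (\<Sum>a<?N. 2 * (\<Sum>i\<in>UNIV. L ! a * (inner2 (e a) (Xv v i))\<^sup>2))"
      unfolding y_def by (intro sum.cong refl) (simp only: sum_distrib_left mult.left_commute)
    also have "\<dots> = 2 * (\<Sum>a<?N. \<Sum>i\<in>UNIV. L ! a * (inner2 (e a) (Xv v i))\<^sup>2)"
      by (simp only: sum_distrib_left)
    also have "\<dots> = 2 * (\<Sum>i\<in>UNIV. \<Sum>a<?N. L ! a * (inner2 (e a) (Xv v i))\<^sup>2)"
      by (subst sum.swap) (rule refl)
    also have "\<dots> = 2 * (\<Sum>i\<in>UNIV. qf R (Xv v i))"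
      using E.expand2[OF Xv_S[OF vv]] by simp
    also have "\<dots> = ric" unfolding sum_qf_Xv[OF acs] ric_def by simp
    finally show ?thesis .
  qed
  have slam: "(\<Sum>a<?N. L ! a) = (1/2 + 1/n) * S" unfolding S_def n_def by (rule E.lam_trace)
  have csum: "(\<Sum>a<?N. c a) = t * Nr + (1 - t) + (wM - t) * (n - 1)"
  proof -
    have "(\<Sum>a<?N. c a) = t * Nr + (1 - t) * (\<Sum>a<?N. x a) + (wM - t) * (\<Sum>a<?N. y a)"
      unfolding c_def Nr_def by (simp add: sum.distrib sum_distrib_left)
    then show ?thesis using sx sy by simp
  qed
  have csum2: "(\<Sum>a<?N. c a) = \<alpha>"
  proof (cases "\<alpha> \<le> n")
    case True
    then show ?thesis unfolding csum t_def wM_def using nz by simp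
  next
    case False
    then have "0 < Nr - n" using aN unfolding Nr_def by simp
    then have tt: "t * (Nr - n) = \<alpha> - n" unfolding t_def using False by simp
    have w1: "wM = 1" unfolding wM_def using False by simp
    have "t * Nr + (1 - t) + (wM - t) * (n - 1) = t * (Nr - n) + n" unfolding w1 by (simp add: algebra_simps)
    then show ?thesis unfolding csum tt by simp
  qed
  have lcs: "(\<Sum>a<?N. L ! a * c a) = t * ((1/2 + 1/n) * S) + (1 - t) * ((2 * n * ric - S) / (n * (n - 1))) + (wM - t) * ric"
  proof -
    have "(\<Sum>a<?N. L ! a * c a) = t * (\<Sum>a<?N. L ! a) + (1 - t) * (\<Sum>a<?N. L ! a * x a) + (wM - t) * (\<Sum>a<?N. L ! a * y a)"
    proof -
      have "(\<Sum>a<?N. L ! a * c a) = (\<Sum>a<?N. t * L ! a + (1 - t) * (L ! a * x a) + (wM - t) * (L ! a * y a))"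
        unfolding c_def by (intro sum.cong refl) (simp add: algebra_simps)
      then show ?thesis by (simp only: sum.distrib sum_distrib_left)
    qed
    then show ?thesis using slam slx sly by simp
  qed
  have up: "partial_eig_sum L \<alpha> \<le> t * ((1/2 + 1/n) * S) + (1 - t) * ((2 * n * ric - S) / (n * (n - 1))) + (wM - t) * ric"
    using rearr[OF srt len c01 csum2] a1 aN lcs by simp
  have avg: "eig_average L = (1/2 + 1/n) * S / Nr"
    unfolding eig_average_def sum_list_sum_nth len Nr_def using slam by (simp add: atLeast0LessThan)
  have apos: "0 < \<alpha>" using a1 by simp
  have l2': "(1/2 + 1/n) * S / Nr = S / (n * (n - 1))"
  proof -
    have "(1/2 + 1/n) / ((n - 1) * (n + 2) / 2) = 1 / (n * (n - 1))" by (rule l2[OF n3r])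
    then show ?thesis unfolding Nr by (metis times_divide_eq_left mult.commute divide_divide_eq_left mult_1)
  qed
  have lo_gen: "\<And>\<Theta>. partial_eig_sum L \<alpha> / \<alpha> \<ge> - \<Theta> * eig_average L \<Longrightarrow>
      partial_eig_sum L \<alpha> \<ge> - (\<Theta> * \<alpha>) * (S / (n * (n - 1)))"
  proof -
    fix \<Theta> assume h: "partial_eig_sum L \<alpha> / \<alpha> \<ge> - \<Theta> * eig_average L"
    have "partial_eig_sum L \<alpha> = (partial_eig_sum L \<alpha> / \<alpha>) * \<alpha>" using apos by simp
    also have "\<dots> \<ge> (- \<Theta> * eig_average L) * \<alpha>" using h apos by (intro mult_right_mono) auto
    finally show "partial_eig_sum L \<alpha> \<ge> - (\<Theta> * \<alpha>) * (S / (n * (n - 1)))"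
      unfolding avg l2' by (simp add: mult_ac)
  qed
  have lo_gen_strict: "\<And>\<Theta>. partial_eig_sum L \<alpha> / \<alpha> > - \<Theta> * eig_average L \<Longrightarrow>
      partial_eig_sum L \<alpha> > - (\<Theta> * \<alpha>) * (S / (n * (n - 1)))"
  proof -
    fix \<Theta> assume h: "partial_eig_sum L \<alpha> / \<alpha> > - \<Theta> * eig_average L"
    have "partial_eig_sum L \<alpha> = (partial_eig_sum L \<alpha> / \<alpha>) * \<alpha>" using apos by simp
    also have "\<dots> > (- \<Theta> * eig_average L) * \<alpha>" using h apos by (intro mult_strict_right_mono) auto
    finally show "partial_eig_sum L \<alpha> > - (\<Theta> * \<alpha>) * (S / (n * (n - 1)))"
      unfolding avg l2' by (simp add: mult_ac)
  qed
  have Th: "Theta_bar (card (UNIV :: 'n set)) \<alpha> * \<alpha> = (if \<alpha> \<le> n then 1 else 1 + n * (n - \<alpha>) / (n - 2))"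
  proof -
    have e: "n * (n - \<alpha>) / ((n - 2) * \<alpha>) * \<alpha> = n * (n - \<alpha>) / (n - 2)"
    proof -
      have "n * (n - \<alpha>) / ((n - 2) * \<alpha>) = (n * (n - \<alpha>) / (n - 2)) / \<alpha>" by simp
      then show ?thesis using apos by simp
    qed
    have e2: "(1 / \<alpha> + n * (n - \<alpha>) / ((n - 2) * \<alpha>)) * \<alpha> = 1 + n * (n - \<alpha>) / (n - 2)"
      unfolding distrib_right e using apos by simp
    show ?thesis
    proof (cases "\<alpha> \<le> n")
      case True
      then have "Theta_bar (card (UNIV :: 'n set)) \<alpha> = 1 / \<alpha>" unfolding Theta_bar_def n_def by simp
      then show ?thesis using True apos by simp
    next
      case False
      then have "Theta_bar (card (UNIV :: 'n set)) \<alpha> = 1 / \<alpha> + n * (n - \<alpha>) / ((n - 2) * \<alpha>)"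
        unfolding Theta_bar_def n_def by simp
      then show ?thesis using False e2 by simp
    qed
  qed
  show ?thesis
  proof (cases "\<alpha> \<le> n")
    case True
    have up1: "partial_eig_sum L \<alpha> \<le> (2 * n * ric - S) / (n * (n - 1)) + ((\<alpha> - 1) / (n - 1)) * ric"
      using up True unfolding t_def wM_def by simp
    show ?thesis
    proof (intro conjI impI)
      assume "in_cone R \<alpha> (Theta_bar (card (UNIV :: 'n set)) \<alpha>)"
      then have "partial_eig_sum L \<alpha> / \<alpha> \<ge> - Theta_bar (card (UNIV :: 'n set)) \<alpha> * eig_average L"
        unfolding in_cone_def L_def .
      from lo_gen[OF this] have "partial_eig_sum L \<alpha> \<ge> - (1 * (S / (n * (n - 1))))"
        unfolding Th using True by simp
      then show "0 \<le> ricci_form R v" using alg_case1[OF n3r a1 True up1] unfolding ric_def by blast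
    next
      assume "in_cone_interior R \<alpha> (Theta_bar (card (UNIV :: 'n set)) \<alpha>)"
      then have "partial_eig_sum L \<alpha> / \<alpha> > - Theta_bar (card (UNIV :: 'n set)) \<alpha> * eig_average L"
        unfolding in_cone_interior_def L_def .
      from lo_gen_strict[OF this] have "partial_eig_sum L \<alpha> > - (1 * (S / (n * (n - 1))))"
        unfolding Th using True by simp
      then show "0 < ricci_form R v" using alg_case1_strict[OF n3r a1 True up1] unfolding ric_def by blast
    qed
  next
    case False
    then have na: "n < \<alpha>" by simp
    have aNr: "\<alpha> < Nr" using aN unfolding Nr_def .
    have up2: "partial_eig_sum L \<alpha> \<le> t * ((1/2 + 1/n) * S) + (1 - t) * ((2 * n * ric - S) / (n * (n - 1))) + (1 - t) * ric"
      using up False unfolding wM_def by simp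
    have tt: "t = (\<alpha> - n) / (Nr - n)" unfolding t_def using False by simp
    note AC = alg_case2[OF n3r Nr na aNr tt refl refl up2]
    have ThF: "Theta_bar (card (UNIV :: 'n set)) \<alpha> * \<alpha> = 1 + n * (n - \<alpha>) / (n - 2)"
      unfolding Th using False by simp
    have conv: "- (1 + n * (n - \<alpha>) / (n - 2)) * S / (n * (n - 1)) = - (1 + n * (n - \<alpha>) / (n - 2)) * (S / (n * (n - 1)))"
      by (rule times_divide_eq_right[symmetric])
    show ?thesis
    proof (intro conjI impI)
      assume "in_cone R \<alpha> (Theta_bar (card (UNIV :: 'n set)) \<alpha>)"
      then have "partial_eig_sum L \<alpha> / \<alpha> \<ge> - Theta_bar (card (UNIV :: 'n set)) \<alpha> * eig_average L"
        unfolding in_cone_def L_def .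
      from lo_gen[OF this] have "- (1 + n * (n - \<alpha>) / (n - 2)) * (S / (n * (n - 1))) \<le> partial_eig_sum L \<alpha>"
        unfolding ThF .
      then have "- (1 + n * (n - \<alpha>) / (n - 2)) * S / (n * (n - 1)) \<le> partial_eig_sum L \<alpha>"
        unfolding conv .
      then have "0 \<le> ric" by (rule AC(1))
      then show "0 \<le> ricci_form R v" unfolding ric_def .
    next
      assume "in_cone_interior R \<alpha> (Theta_bar (card (UNIV :: 'n set)) \<alpha>)"
      then have "partial_eig_sum L \<alpha> / \<alpha> > - Theta_bar (card (UNIV :: 'n set)) \<alpha> * eig_average L"
        unfolding in_cone_interior_def L_def .
      from lo_gen_strict[OF this] have "- (1 + n * (n - \<alpha>) / (n - 2)) * (S / (n * (n - 1))) < partial_eig_sum L \<alpha>"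
        unfolding ThF .
      then have "- (1 + n * (n - \<alpha>) / (n - 2)) * S / (n * (n - 1)) < partial_eig_sum L \<alpha>"
        unfolding conv .
      then have "0 < ric" by (rule AC(2))
      then show "0 < ricci_form R v" unfolding ric_def .
    qed
  qed
qed


lemma dot_scale: "dot (\<lambda>i. c * v i) (\<lambda>i. c * v i) = c\<^sup>2 * dot v v"
  unfolding dot_def by (simp add: sum_distrib_left power2_eq_square mult_ac)

lemma dot_pos: "(\<exists>i. v i \<noteq> 0) \<Longrightarrow> 0 < dot v (v::'n::finite \<Rightarrow> real)"
proof -
  assume "\<exists>i. v i \<noteq> 0"
  then obtain i where i: "v i \<noteq> 0" by blast
  show ?thesis unfolding dot_def
    by (rule sum_pos2[of UNIV i]) (use i in \<open>auto simp: zero_less_mult_iff\<close>)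
qed

theorem proposition1p4:
  fixes R :: "('n::finite) tensor4" and \<alpha> :: real
  assumes "(card (UNIV :: 'n set)) \<ge> 3"
    and "alg_curv_tensor R"
    and "1 \<le> \<alpha>" and "\<alpha> < real (dimS20 (card (UNIV :: 'n set)))"
  shows "(in_cone R \<alpha> (Theta_bar (card (UNIV :: 'n set)) \<alpha>) \<longrightarrow> nonneg_ricci R) \<and>
         (in_cone_interior R \<alpha> (Theta_bar (card (UNIV :: 'n set)) \<alpha>) \<longrightarrow> pos_ricci R)"
proof -
  have EL: "is_eigenvalue_list R (curv_op2_eigenvalues R)" by (rule eigenlist_exists[OF assms(2)])
  have U: "(in_cone R \<alpha> (Theta_bar (card (UNIV :: 'n set)) \<alpha>) \<longrightarrow> 0 \<le> ricci_form R u) \<and>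
         (in_cone_interior R \<alpha> (Theta_bar (card (UNIV :: 'n set)) \<alpha>) \<longrightarrow> 0 < ricci_form R u)"
    if "dot u u = 1" for u :: "'n \<Rightarrow> real"
    by (rule unit_case[OF assms(1) assms(2) assms(3) assms(4) that EL])
  have scale: "ricci_form R v = dot v v * ricci_form R (\<lambda>i. (1 / sqrt (dot v v)) * v i)
      \<and> dot (\<lambda>i. (1 / sqrt (dot v v)) * v i) (\<lambda>i. (1 / sqrt (dot v v)) * v i) = 1"
    if pos: "0 < dot v v" for v :: "'n \<Rightarrow> real"
  proof
    let ?s = "sqrt (dot v v)"
    have s: "0 < ?s" using pos by simp
    have ss: "?s\<^sup>2 = dot v v" using pos by simp
    have "ricci_form R (\<lambda>i. (1 / ?s) * v i) = (1 / ?s)\<^sup>2 * ricci_form R v" by (rule ricci_form_scale)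
    then show "ricci_form R v = dot v v * ricci_form R (\<lambda>i. (1 / ?s) * v i)"
      using s ss by (simp add: power_divide)
    have "dot (\<lambda>i. (1 / ?s) * v i) (\<lambda>i. (1 / ?s) * v i) = (1 / ?s)\<^sup>2 * dot v v"
      by (rule dot_scale)
    then show "dot (\<lambda>i. (1 / ?s) * v i) (\<lambda>i. (1 / ?s) * v i) = 1"
      using s ss pos by (simp add: power_divide)
  qed
  show ?thesis
  proof (intro conjI impI)
    assume C: "in_cone R \<alpha> (Theta_bar (card (UNIV :: 'n set)) \<alpha>)"
    show "nonneg_ricci R" unfolding nonneg_ricci_def
    proof
      fix v :: "'n \<Rightarrow> real"
      show "0 \<le> ricci_form R v"
      proof (cases "\<exists>i. v i \<noteq> 0")
        case True
        then have p: "0 < dot v v" by (rule dot_pos)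
        have "0 \<le> ricci_form R (\<lambda>i. (1 / sqrt (dot v v)) * v i)" using U scale[OF p] C by blast
        then show ?thesis using scale[OF p] p by simp
      next
        case False
        then have "v = (\<lambda>i. 0)" by auto
        then show ?thesis unfolding ricci_form_def by simp
      qed
    qed
  next
    assume C: "in_cone_interior R \<alpha> (Theta_bar (card (UNIV :: 'n set)) \<alpha>)"
    show "pos_ricci R" unfolding pos_ricci_def
    proof (intro allI impI)
      fix v :: "'n \<Rightarrow> real"
      assume "\<exists>i. v i \<noteq> 0"
      then have p: "0 < dot v v" by (rule dot_pos)
      have "0 < ricci_form R (\<lambda>i. (1 / sqrt (dot v v)) * v i)" using U scale[OF p] C by blast
      then show "0 < ricci_form R v" using scale[OF p] p by simp
    qed
  qed
qed

end
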